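(* Let $\mathcal{F}=(\mu_n,\mathcal{S}_n,K_n,\pi_n)_{n\ge1}$ be a family of irreducible, reversible discrete-time finite Markov chains. Assume that $T_{n,2}(\mu_n,\epsilon_0)\to\infty$ for some $\epsilon_0>0$ or $\tau_n(c)\to\infty$ for some $c>0$, and that $\pi_n(|\mu_nK_n/\pi_n|^2)\to\infty$. Then the following are equivalent: (1) $\mathcal{F}$ has an $L^2$-cutoff; (2) for all $\epsilon,c>0$, $T_{n,2}(\mu_n,\epsilon)\lambda_{n,j_n(c)}\to\infty$; (3) there is $\epsilon>0$ with $T_{n,2}(\mu_n,\epsilon)\lambda_{n,j_n(c)}\to\infty$ for all $c>0$; (4) for all $c>0$, $\tau_n(c)\lambda_{n,j_n(c)}\to\infty$; (5) for all $\tilde c,c>0$, $\tau_n(\tilde c)\lambda_{n,j_n(c)}\to\infty$; (6) there is $\tilde c>0$ with $\tau_n(\tilde c)\lambda_{n,j_n(c)}\to\infty$ for all $c>0$. Moreover, if $\mathcal{F}$ has an $L^2$-cutoff, then $\tau_n(c)$ is an $L^2$-cutoff time for every $c>0$, and \[|T_{n,2}(\mu_n,\epsilon)-T_{n,2}(\mu_n,\delta)|=O\big(\max\{1,1/\lambda_{n,j_n(c)}\}\big)\ \ \forall\epsilon,\delta,c>0,\] \[|T_{n,2}(\mu_n,\epsilon)-\tau_n(c)|=O\big(\max\{1,\sqrt{\tau_n(c)/\lambda_{n,j_n(c)}}\}\big)\ \ \forall\epsilon,c>0.\]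
   Context: For the $n$th chain, $d_{n,2}(\mu_n,m)=\big(\sum_y|\mu_nK_n^m(y)/\pi_n(y)-1|^2\pi_n(y)\big)^{1/2}$ for integers $m\ge0$, $T_{n,2}(\mu_n,\epsilon)=\min\{m\in\mathbb{Z}_{\ge0}:d_{n,2}(\mu_n,m)\le\epsilon\}$, $\pi_n(|\mu_nK_n/\pi_n|^2)=\sum_y(\mu_nK_n(y))^2/\pi_n(y)$. Let $1=\beta_{n,0},\beta_{n,1},\dots,\beta_{n,|\mathcal{S}_n|-1}$ be the eigenvalues of $K_n$ with $|\beta_{n,1}|\ge|\beta_{n,2}|\ge\cdots$ and $L^2(\pi_n)$-orthonormal right eigenvectors $\phi_{n,0}=\mathbf 1,\phi_{n,1},\dots$; set $\lambda_{n,i}=-\log|\beta_{n,i}|$ (with $-\log0=\infty$, $1/\infty=0$); $\mu_n(\phi)=\sum_x\mu_n(x)\phi(x)$. For $c>0$: $j_n(c)=\min\{j\ge1:\sum_{i=1}^j|\mu_n(\phi_{n,i})|^2>c\}$ and $\tau_n(c)=\max_{j\ge j_n(c)}\frac{\log(1+\sum_{i=1}^j|\mu_n(\phi_{n,i})|^2)}{2\lambda_{n,j}}$. $L^2$-cutoff: there is $t_n>0$ with $d_{n,2}(\mu_n,\lceil(1+a)t_n\rceil)\to0$ and $d_{n,2}(\mu_n,\lfloor(1-a)t_n\rfloor)\to\infty$ for all $a\in(0,1)$; $t_n$ is a cutoff time. $a_n=O(b_n)$ means $\sup_na_n/b_n<\infty$. *)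

theory Defs
  imports "HOL-Analysis.Analysis"
begin

text \<open>A finite chain on the state set S with kernel K (only its values on S x S matter).\<close>

primrec kpow :: "'a set \<Rightarrow> ('a \<Rightarrow> 'a \<Rightarrow> real) \<Rightarrow> nat \<Rightarrow> 'a \<Rightarrow> 'a \<Rightarrow> real" where
  "kpow S K 0 x y = (if x = y then 1 else 0)"
| "kpow S K (Suc m) x y = (\<Sum>z\<in>S. kpow S K m x z * K z y)"

definition distK :: "'a set \<Rightarrow> ('a \<Rightarrow> 'a \<Rightarrow> real) \<Rightarrow> ('a \<Rightarrow> real) \<Rightarrow> nat \<Rightarrow> 'a \<Rightarrow> real" where
  "distK S K mu m y = (\<Sum>x\<in>S. mu x * kpow S K m x y)"

definition is_prob :: "'a set \<Rightarrow> ('a \<Rightarrow> real) \<Rightarrow> bool" where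
  "is_prob S p \<longleftrightarrow> (\<forall>x\<in>S. 0 \<le> p x) \<and> (\<Sum>x\<in>S. p x) = 1"

definition stochastic :: "'a set \<Rightarrow> ('a \<Rightarrow> 'a \<Rightarrow> real) \<Rightarrow> bool" where
  "stochastic S K \<longleftrightarrow> (\<forall>x\<in>S. \<forall>y\<in>S. 0 \<le> K x y) \<and> (\<forall>x\<in>S. (\<Sum>y\<in>S. K x y) = 1)"

definition irreducible_chain :: "'a set \<Rightarrow> ('a \<Rightarrow> 'a \<Rightarrow> real) \<Rightarrow> bool" where
  "irreducible_chain S K \<longleftrightarrow> (\<forall>x\<in>S. \<forall>y\<in>S. \<exists>m. 0 < kpow S K m x y)"

definition irred_reversible_chain :: "'a set \<Rightarrow> ('a \<Rightarrow> 'a \<Rightarrow> real) \<Rightarrow> ('a \<Rightarrow> real) \<Rightarrow> bool" where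
  "irred_reversible_chain S K pp \<longleftrightarrow>
     finite S \<and> S \<noteq> {} \<and> stochastic S K \<and> irreducible_chain S K \<and>
     is_prob S pp \<and> (\<forall>x\<in>S. 0 < pp x) \<and>
     (\<forall>x\<in>S. \<forall>y\<in>S. pp x * K x y = pp y * K y x)"

definition ordered_eigenbasis :: "'a set \<Rightarrow> ('a \<Rightarrow> 'a \<Rightarrow> real) \<Rightarrow> ('a \<Rightarrow> real) \<Rightarrow>
    (nat \<Rightarrow> real) \<Rightarrow> (nat \<Rightarrow> 'a \<Rightarrow> real) \<Rightarrow> bool" where
  "ordered_eigenbasis S K pp beta phi \<longleftrightarrow>
     beta 0 = 1 \<and> (\<forall>x\<in>S. phi 0 x = 1) \<and>
     (\<forall>i<card S. \<forall>x\<in>S. (\<Sum>y\<in>S. K x y * phi i y) = beta i * phi i x) \<and>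
     (\<forall>i<card S. \<forall>k<card S. (\<Sum>x\<in>S. phi i x * phi k x * pp x) = (if i = k then 1 else 0)) \<and>
     (\<forall>i. 1 \<le> i \<and> Suc i < card S \<longrightarrow> \<bar>beta (Suc i)\<bar> \<le> \<bar>beta i\<bar>)"

definition d2 :: "'a set \<Rightarrow> ('a \<Rightarrow> 'a \<Rightarrow> real) \<Rightarrow> ('a \<Rightarrow> real) \<Rightarrow> ('a \<Rightarrow> real) \<Rightarrow> nat \<Rightarrow> real" where
  "d2 S K pp mu m = sqrt (\<Sum>y\<in>S. (distK S K mu m y / pp y - 1)\<^sup>2 * pp y)"

definition T2 :: "'a set \<Rightarrow> ('a \<Rightarrow> 'a \<Rightarrow> real) \<Rightarrow> ('a \<Rightarrow> real) \<Rightarrow> ('a \<Rightarrow> real) \<Rightarrow> real \<Rightarrow> ereal" where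
  "T2 S K pp mu eps =
     (if \<exists>m. d2 S K pp mu m \<le> eps then ereal (real (LEAST m. d2 S K pp mu m \<le> eps)) else \<infinity>)"

definition one_step_norm :: "'a set \<Rightarrow> ('a \<Rightarrow> 'a \<Rightarrow> real) \<Rightarrow> ('a \<Rightarrow> real) \<Rightarrow> ('a \<Rightarrow> real) \<Rightarrow> real" where
  "one_step_norm S K pp mu = (\<Sum>y\<in>S. (distK S K mu 1 y)\<^sup>2 / pp y)"

definition eig_rate :: "real \<Rightarrow> ereal" where
  "eig_rate b = (if b = 0 then \<infinity> else ereal (- ln \<bar>b\<bar>))"

definition coef :: "'a set \<Rightarrow> ('a \<Rightarrow> real) \<Rightarrow> ('a \<Rightarrow> real) \<Rightarrow> real" where
  "coef S mu f = (\<Sum>x\<in>S. mu x * f x)"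

definition partial_mass :: "'a set \<Rightarrow> ('a \<Rightarrow> real) \<Rightarrow> (nat \<Rightarrow> 'a \<Rightarrow> real) \<Rightarrow> nat \<Rightarrow> real" where
  "partial_mass S mu phi j = (\<Sum>i\<in>{1..j}. (coef S mu (phi i))\<^sup>2)"

definition jn :: "'a set \<Rightarrow> ('a \<Rightarrow> real) \<Rightarrow> (nat \<Rightarrow> 'a \<Rightarrow> real) \<Rightarrow> real \<Rightarrow> nat" where
  "jn S mu phi c = (LEAST j. 1 \<le> j \<and> j < card S \<and> c < partial_mass S mu phi j)"

text \<open>tau_n(c) = max_{j \<ge> j_n(c)} log(1 + sum_{i\<le>j} |mu(phi_i)|^2) / (2 lambda_j), computed in ereal
  (so x / \<infinity> = 0).\<close>
definition taun :: "'a set \<Rightarrow> (nat \<Rightarrow> real) \<Rightarrow> ('a \<Rightarrow> real) \<Rightarrow> (nat \<Rightarrow> 'a \<Rightarrow> real) \<Rightarrow> real \<Rightarrow> ereal" where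
  "taun S beta mu phi c =
     Max ((\<lambda>j. ereal (ln (1 + partial_mass S mu phi j)) / (2 * eig_rate (beta j)))
            ` {jn S mu phi c..<card S})"

definition cutoff_limits :: "(nat \<Rightarrow> nat \<Rightarrow> real) \<Rightarrow> (nat \<Rightarrow> real) \<Rightarrow> bool" where
  "cutoff_limits d t \<longleftrightarrow>
     (\<forall>a. 0 < a \<and> a < 1 \<longrightarrow>
        ((\<lambda>n. d n (nat \<lceil>(1 + a) * t n\<rceil>)) \<longlonglongrightarrow> 0) \<and>
        filterlim (\<lambda>n. d n (nat \<lfloor>(1 - a) * t n\<rfloor>)) at_top sequentially)"

definition is_cutoff_time :: "(nat \<Rightarrow> nat \<Rightarrow> real) \<Rightarrow> (nat \<Rightarrow> real) \<Rightarrow> bool" where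
  "is_cutoff_time d t \<longleftrightarrow> (\<forall>n. 0 < t n) \<and> cutoff_limits d t"

definition has_L2_cutoff :: "(nat \<Rightarrow> nat \<Rightarrow> real) \<Rightarrow> bool" where
  "has_L2_cutoff d \<longleftrightarrow> (\<exists>t. is_cutoff_time d t)"

definition esqrt :: "ereal \<Rightarrow> ereal" where
  "esqrt x = (if x = \<infinity> then \<infinity> else ereal (sqrt (real_of_ereal x)))"

end

theory Submission
  imports Defs "Jordan_Normal_Form.Determinant"
begin


lemma powr_m1: "0 < (x::real) \<Longrightarrow> x powr (-r) * x = x powr (1-r)"
  by (simp add: powr_diff powr_minus field_simps)

lemma key_ineq:
  fixes x y W r :: real
  assumes "0 \<le> y" "y \<le> x" "0 \<le> W" "0 < x \<Longrightarrow> W \<le> x powr (-r)" "0 \<le> r" "r < 1"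
  shows "W * (x - y) \<le> (x powr (1-r) - y powr (1-r)) / (1-r)"
proof (cases "x = 0")
  case True then show ?thesis using assms by simp
next
  case False
  then have x: "0 < x" using assms by simp
  have xx: "x powr (-r) * x = x powr (1-r)" using x by (rule powr_m1)
  have "W * (x - y) \<le> x powr (-r) * (x - y)" using assms x by (intro mult_right_mono) auto
  also have "\<dots> \<le> (x powr (1-r) - y powr (1-r)) / (1-r)"
  proof (cases "y = 0")
    case True
    have "x powr (1-r) \<le> x powr (1-r) / (1-r)" using assms x
      by (simp add: le_divide_eq)
    then show ?thesis using True xx by simp
  next
    case False
    then have y: "0 < y" using assms by simp
    have Y: "x powr r * y powr (1-r) \<le> r * x + (1-r) * y"
      using Youngs_inequality_0[of r "1-r" x y] assms x y by simp
    have "y powr (1-r) = x powr (-r) * (x powr r * y powr (1-r))"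
      using x by (simp add: powr_add[symmetric])
    also have "\<dots> \<le> x powr (-r) * (r * x + (1-r) * y)" by (intro mult_left_mono Y) simp
    also have "\<dots> = r * x powr (1-r) + (1-r) * (x powr (-r) * y)" using xx by (simp add: algebra_simps)
    finally have "y powr (1-r) \<le> r * x powr (1 - r) + (1 - r) * (x powr - r * y)" .
    then have "(1-r) * (x powr (-r) * (x - y)) \<le> x powr (1-r) - y powr (1-r)"
      using xx by (simp add: algebra_simps)
    then show ?thesis using assms by (simp add: le_divide_eq mult.commute)
  qed
  finally show ?thesis .
qed

lemma abel:
  fixes x w :: "nat \<Rightarrow> real"
  assumes ak: "a \<le> k" and xn: "\<And>i. a \<le> i \<Longrightarrow> i \<le> k \<Longrightarrow> 0 \<le> x i"
    and xm: "\<And>i. a \<le> i \<Longrightarrow> i < k \<Longrightarrow> x (Suc i) \<le> x i"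
    and wn: "\<And>i. a \<le> i \<Longrightarrow> i \<le> k \<Longrightarrow> 0 \<le> w i" and A: "0 \<le> A" and r: "0 \<le> r" "r < 1"
    and H: "\<And>i. a \<le> i \<Longrightarrow> i \<le> k \<Longrightarrow> 0 < x i \<Longrightarrow> A + (\<Sum>j\<in>{a..i}. w j) \<le> x i powr (-r)"
  shows "(\<Sum>i\<in>{a..k}. w i * x i) \<le> x a powr (1-r) / (1-r)"
proof -
  define G where "G y = y powr (1-r) / (1-r)" for y
  define S where "S i = A + (\<Sum>j\<in>{a..i}. w j)" for i
  have Snn: "0 \<le> S i" if "a \<le> i" "i \<le> k" for i unfolding S_def using that A wn
    by (intro add_nonneg_nonneg sum_nonneg) auto
  have Q: "k' \<le> k \<longrightarrow> (\<Sum>i\<in>{a..k'}. w i * x i) + G (x k') - S k' * x k' \<le> G (x a)" if "a \<le> k'" for k'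
    using that
  proof (induction k' rule: dec_induct)
    case base
    have "0 \<le> A * x a" using A xn ak by simp
    then show ?case by (simp add: S_def algebra_simps)
  next
    case (step m)
    show ?case
    proof
      assume mk: "Suc m \<le> k"
      have IH: "(\<Sum>i\<in>{a..m}. w i * x i) + G (x m) - S m * x m \<le> G (x a)" using step mk by simp
      have SS: "S (Suc m) = S m + w (Suc m)" unfolding S_def using step by simp
      have sum: "(\<Sum>i\<in>{a..Suc m}. w i * x i) = (\<Sum>i\<in>{a..m}. w i * x i) + w (Suc m) * x (Suc m)"
        using step by simp
      have K: "S m * (x m - x (Suc m)) \<le> G (x m) - G (x (Suc m))"
        unfolding G_def diff_divide_distrib[symmetric]
        by (rule key_ineq) (use step mk xn xm Snn H r in \<open>auto simp: S_def\<close>)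
      show "(\<Sum>i\<in>{a..Suc m}. w i * x i) + G (x (Suc m)) - S (Suc m) * x (Suc m) \<le> G (x a)"
        using IH K unfolding sum SS by (simp add: algebra_simps)
    qed
  qed
  have Qk: "(\<Sum>i\<in>{a..k}. w i * x i) + G (x k) - S k * x k \<le> G (x a)" using Q[OF ak] by simp
  have "S k * x k \<le> G (x k)"
  proof (cases "x k = 0")
    case True then show ?thesis by (simp add: G_def)
  next
    case False
    then have xk: "0 < x k" using xn[OF ak] by simp
    have "S k * x k \<le> x k powr (-r) * x k" using H[OF ak _ xk] xk by (simp add: S_def)
    also have "\<dots> = x k powr (1-r)" using xk by (rule powr_m1)
    also have "\<dots> \<le> G (x k)" unfolding G_def using r mult_left_le[of "1-r" "x k powr (1-r)"] by (simp add: le_divide_eq)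
    finally show ?thesis .
  qed
  then show ?thesis using Qk unfolding G_def by simp
qed



definition DD :: "nat \<Rightarrow> (nat \<Rightarrow> real) \<Rightarrow> (nat \<Rightarrow> real) \<Rightarrow> nat \<Rightarrow> real" where
  "DD N b w m = (\<Sum>i\<in>{1..<N}. w i * b i ^ (2*m))"
definition WW :: "(nat \<Rightarrow> real) \<Rightarrow> nat \<Rightarrow> real" where
  "WW w j = (\<Sum>i\<in>{1..j}. w i)"
definition JJ :: "nat \<Rightarrow> (nat \<Rightarrow> real) \<Rightarrow> real \<Rightarrow> nat" where
  "JJ N w c = (LEAST j. 1 \<le> j \<and> j < N \<and> c < WW w j)"
definition vl :: "(nat \<Rightarrow> real) \<Rightarrow> (nat \<Rightarrow> real) \<Rightarrow> nat \<Rightarrow> real" where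
  "vl b w j = (if b j = 0 then 0 else ln (1 + WW w j) / (2 * (- ln (b j))))"
definition TAU :: "nat \<Rightarrow> (nat \<Rightarrow> real) \<Rightarrow> (nat \<Rightarrow> real) \<Rightarrow> real \<Rightarrow> real" where
  "TAU N b w c = Max (vl b w ` {JJ N w c..<N})"
definition LAM :: "nat \<Rightarrow> (nat \<Rightarrow> real) \<Rightarrow> (nat \<Rightarrow> real) \<Rightarrow> real \<Rightarrow> real" where
  "LAM N b w c = - ln (b (JJ N w c))"
definition adm :: "nat \<Rightarrow> (nat \<Rightarrow> real) \<Rightarrow> (nat \<Rightarrow> real) \<Rightarrow> bool" where
  "adm N b w \<longleftrightarrow> (\<forall>i. 1 \<le> i \<and> i < N \<longrightarrow> 0 \<le> w i \<and> 0 \<le> b i \<and> b i \<le> 1)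
     \<and> (\<forall>i. 1 \<le> i \<and> Suc i < N \<longrightarrow> b (Suc i) \<le> b i)"
definition jex :: "nat \<Rightarrow> (nat \<Rightarrow> real) \<Rightarrow> real \<Rightarrow> bool" where
  "jex N w c \<longleftrightarrow> (\<exists>j. 1 \<le> j \<and> j < N \<and> c < WW w j)"

lemma adm_w: "adm N b w \<Longrightarrow> 1 \<le> i \<Longrightarrow> i < N \<Longrightarrow> 0 \<le> w i"
  and adm_b0: "adm N b w \<Longrightarrow> 1 \<le> i \<Longrightarrow> i < N \<Longrightarrow> 0 \<le> b i"
  and adm_b1: "adm N b w \<Longrightarrow> 1 \<le> i \<Longrightarrow> i < N \<Longrightarrow> b i \<le> 1"
  by (auto simp: adm_def)

lemma adm_pow: "adm N b w \<Longrightarrow> 1 \<le> i \<Longrightarrow> i < N \<Longrightarrow> 0 \<le> b i ^ k"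
  by (auto simp: adm_def)

lemma adm_mono: assumes "adm N b w" "1 \<le> i" "i \<le> k" "k < N" shows "b k \<le> b i"
  using assms(3,4)
proof (induction k rule: dec_induct)
  case base then show ?case by simp
next
  case (step k)
  then have "b (Suc k) \<le> b k" using assms(1,2) by (auto simp: adm_def)
  then show ?case using step by simp
qed

lemma WW_mono: assumes "adm N b w" "j \<le> k" "k < N" shows "WW w j \<le> WW w k"
proof -
  have "WW w k = WW w j + (\<Sum>i\<in>{Suc j..k}. w i)" unfolding WW_def
    using assms(2) by (subst sum.union_disjoint[symmetric]) (auto intro!: sum.cong)
  moreover have "0 \<le> (\<Sum>i\<in>{Suc j..k}. w i)" using assms by (auto intro!: sum_nonneg adm_w)
  ultimately show ?thesis by simp
qed

lemma WW_nonneg: assumes "adm N b w" "k < N" shows "0 \<le> WW w k"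
  unfolding WW_def using assms by (auto intro!: sum_nonneg adm_w)

lemma JJ: assumes "jex N w c" "0 \<le> c"
  shows "1 \<le> JJ N w c" "JJ N w c < N" "c < WW w (JJ N w c)" "WW w (JJ N w c - 1) \<le> c"
proof -
  obtain j where j: "1 \<le> j \<and> j < N \<and> c < WW w j" using assms unfolding jex_def by blast
  have L: "1 \<le> JJ N w c \<and> JJ N w c < N \<and> c < WW w (JJ N w c)"
    unfolding JJ_def by (rule LeastI[of _ j]) (use j in auto)
  then show "1 \<le> JJ N w c" "JJ N w c < N" "c < WW w (JJ N w c)" by auto
  show "WW w (JJ N w c - 1) \<le> c"
  proof (cases "JJ N w c = 1")
    case True then show ?thesis using assms by (simp add: WW_def)
  next
    case False
    have lt: "JJ N w c - 1 < JJ N w c" using L by auto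
    have "\<not> (1 \<le> JJ N w c - 1 \<and> JJ N w c - 1 < N \<and> c < WW w (JJ N w c - 1))"
      using not_less_Least[OF lt[unfolded JJ_def]] unfolding JJ_def .
    then show ?thesis using L False by auto
  qed
qed

lemma JJ_mono: assumes "jex N w c" "0 < c1" "c1 \<le> c" "adm N b w"
  shows "jex N w c1" "JJ N w c1 \<le> JJ N w c"
proof -
  have "1 \<le> JJ N w c \<and> JJ N w c < N \<and> c1 < WW w (JJ N w c)" using JJ[OF assms(1)] assms by auto
  then show "jex N w c1" unfolding jex_def by blast
  show "JJ N w c1 \<le> JJ N w c" unfolding JJ_def[of N w c1]
    by (rule Least_le) (use JJ[OF assms(1)] assms in auto)
qed

lemma adm_term: "adm N b w \<Longrightarrow> 1 \<le> i \<Longrightarrow> i < N \<Longrightarrow> 0 \<le> w i * b i ^ k"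
  by (auto simp: adm_def)

lemma DD_nonneg: "adm N b w \<Longrightarrow> 0 \<le> DD N b w m"
  unfolding DD_def by (auto intro!: sum_nonneg adm_term)

lemma DD_mono: assumes "adm N b w" "m \<le> m'" shows "DD N b w m' \<le> DD N b w m"
  unfolding DD_def
proof (rule sum_mono)
  fix i assume i: "i \<in> {1..<N}"
  have "b i ^ (2*m') \<le> b i ^ (2*m)"
    by (rule power_decreasing) (use assms i in \<open>auto intro: adm_b0 adm_b1\<close>)
  then show "w i * b i ^ (2 * m') \<le> w i * b i ^ (2 * m)"
    using assms i by (auto intro!: mult_left_mono adm_w)
qed

lemma LBj: assumes "adm N b w" "1 \<le> j" "j < N" shows "WW w j * b j ^ (2*m) \<le> DD N b w m"
proof -
  have "WW w j * b j ^ (2*m) = (\<Sum>i\<in>{1..j}. w i * b j ^ (2*m))" unfolding WW_def by (simp add: sum_distrib_right)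
  also have "\<dots> \<le> (\<Sum>i\<in>{1..j}. w i * b i ^ (2*m))"
  proof (rule sum_mono)
    fix i assume i: "i \<in> {1..j}"
    have "b j ^ (2*m) \<le> b i ^ (2*m)"
      by (rule power_mono) (use assms i in \<open>auto intro: adm_b0 adm_mono\<close>)
    then show "w i * b j ^ (2*m) \<le> w i * b i ^ (2*m)" using assms i by (auto intro!: mult_left_mono adm_w)
  qed
  also have "\<dots> \<le> DD N b w m" unfolding DD_def
    by (rule sum_mono2) (use assms in \<open>auto intro!: adm_term\<close>)
  finally show ?thesis .
qed

lemma LB0: assumes "adm N b w" "jex N w c" "0 \<le> c" shows "c * b (JJ N w c) ^ (2*m) \<le> DD N b w m"
proof -
  note J = JJ[OF assms(2,3)]
  have "c * b (JJ N w c) ^ (2*m) \<le> WW w (JJ N w c) * b (JJ N w c) ^ (2*m)"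
    using J assms by (intro mult_right_mono) (auto intro!: zero_le_power adm_b0)
  also have "\<dots> \<le> DD N b w m" using LBj[OF assms(1)] J by auto
  finally show ?thesis .
qed

lemma split3: assumes "adm N b w" "1 \<le> J1" "J1 \<le> J" "J < N"
  shows "DD N b w m \<le> WW w (J1 - 1) + WW w (J - 1) * b J1 ^ (2*m) + (\<Sum>i\<in>{J..<N}. w i * b i ^ (2*m))"
proof -
  have "DD N b w m = (\<Sum>i\<in>{1..<J1}. w i * b i ^ (2*m)) + (\<Sum>i\<in>{J1..<J}. w i * b i ^ (2*m)) + (\<Sum>i\<in>{J..<N}. w i * b i ^ (2*m))"
    unfolding DD_def using assms
    by (simp add: sum.atLeastLessThan_concat)
  moreover have "(\<Sum>i\<in>{1..<J1}. w i * b i ^ (2*m)) \<le> WW w (J1 - 1)"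
  proof -
    have "(\<Sum>i\<in>{1..<J1}. w i * b i ^ (2*m)) \<le> (\<Sum>i\<in>{1..<J1}. w i)"
    proof (rule sum_mono)
      fix i assume i: "i \<in> {1..<J1}"
      have "b i ^ (2*m) \<le> 1" using assms i by (auto intro!: power_le_one adm_b0 adm_b1)
      then show "w i * b i ^ (2*m) \<le> w i" using assms i mult_left_le[of "b i ^ (2*m)" "w i"] adm_w[of N b w i] by auto
    qed
    moreover have "{1..<J1} = {1..J1 - 1}" using assms by auto
    ultimately show ?thesis unfolding WW_def by simp
  qed
  moreover have "(\<Sum>i\<in>{J1..<J}. w i * b i ^ (2*m)) \<le> WW w (J - 1) * b J1 ^ (2*m)"
  proof -
    have "(\<Sum>i\<in>{J1..<J}. w i * b i ^ (2*m)) \<le> (\<Sum>i\<in>{J1..<J}. w i * b J1 ^ (2*m))"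
    proof (rule sum_mono)
      fix i assume i: "i \<in> {J1..<J}"
      have "b i ^ (2*m) \<le> b J1 ^ (2*m)" using assms i by (auto intro!: power_mono adm_b0 adm_mono)
      then show "w i * b i ^ (2*m) \<le> w i * b J1 ^ (2*m)" using assms i by (auto intro!: mult_left_mono adm_w)
    qed
    also have "\<dots> = (\<Sum>i\<in>{J1..<J}. w i) * b J1 ^ (2*m)" by (simp add: sum_distrib_right)
    also have "\<dots> \<le> WW w (J - 1) * b J1 ^ (2*m)"
    proof (rule mult_right_mono)
      show "(\<Sum>i\<in>{J1..<J}. w i) \<le> WW w (J - 1)" unfolding WW_def
        by (rule sum_mono2) (use assms in \<open>auto intro: adm_w\<close>)
      show "0 \<le> b J1 ^ (2*m)" using assms by (auto intro: adm_b0)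
    qed
    finally show ?thesis .
  qed
  ultimately show ?thesis by linarith
qed

lemma tail_shift: assumes "adm N b w" "1 \<le> J"
  shows "(\<Sum>i\<in>{J..<N}. w i * b i ^ (2*(m+k))) \<le> b J ^ (2*k) * DD N b w m"
proof (cases "J < N")
  case False then show ?thesis using DD_nonneg[OF assms(1)] assms by (simp add: adm_b0)
next
  case True
  have "(\<Sum>i\<in>{J..<N}. w i * b i ^ (2*(m+k))) \<le> (\<Sum>i\<in>{J..<N}. b J ^ (2*k) * (w i * b i ^ (2*m)))"
  proof (rule sum_mono)
    fix i assume i: "i \<in> {J..<N}"
    have "b i ^ (2*k) \<le> b J ^ (2*k)" using assms i by (auto intro!: power_mono adm_b0 adm_mono)
    then have "w i * b i ^ (2*m) * b i ^ (2*k) \<le> w i * b i ^ (2*m) * b J ^ (2*k)"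
      using assms i by (intro mult_left_mono) (auto intro!: adm_term)
    then show "w i * b i ^ (2*(m+k)) \<le> b J ^ (2*k) * (w i * b i ^ (2*m))"
      by (simp add: power_add algebra_simps)
  qed
  also have "\<dots> = b J ^ (2*k) * (\<Sum>i\<in>{J..<N}. w i * b i ^ (2*m))" by (simp add: sum_distrib_left)
  also have "\<dots> \<le> b J ^ (2*k) * DD N b w m" unfolding DD_def
    using assms True by (intro mult_left_mono sum_mono2) (auto intro!: adm_term)
  finally show ?thesis .
qed

definition good :: "nat \<Rightarrow> (nat \<Rightarrow> real) \<Rightarrow> (nat \<Rightarrow> real) \<Rightarrow> real \<Rightarrow> bool" where
  "good N b w c \<longleftrightarrow> jex N w c \<and> 0 < b (JJ N w c) \<and> b (JJ N w c) < 1"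

lemma TAU_max: assumes "jex N w c" "0 \<le> c"
  shows "\<exists>j\<in>{JJ N w c..<N}. vl b w j = TAU N b w c" "\<And>j. j\<in>{JJ N w c..<N} \<Longrightarrow> vl b w j \<le> TAU N b w c"
proof -
  have ne: "{JJ N w c..<N} \<noteq> {}" using JJ[OF assms] by auto
  have "Max (vl b w ` {JJ N w c..<N}) \<in> vl b w ` {JJ N w c..<N}"
    by (rule Max_in) (use ne in auto)
  then show "\<exists>j\<in>{JJ N w c..<N}. vl b w j = TAU N b w c" unfolding TAU_def by (metis imageE)
  show "\<And>j. j\<in>{JJ N w c..<N} \<Longrightarrow> vl b w j \<le> TAU N b w c" unfolding TAU_def
    by (rule Max_ge) auto
qed

lemma vl_nonneg: assumes "adm N b w" "1 \<le> j" "j < N" shows "0 \<le> vl b w j"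
proof -
  have "0 \<le> ln (1 + WW w j)" using WW_nonneg[OF assms(1,3)] by simp
  moreover have "0 \<le> - ln (b j)" if "b j \<noteq> 0"
    using that adm_b0[OF assms] adm_b1[OF assms] by simp
  ultimately have "b j \<noteq> 0 \<Longrightarrow> 0 \<le> ln (1 + WW w j) / (2 * (- ln (b j)))"
    by (intro divide_nonneg_nonneg) auto
  then show ?thesis unfolding vl_def by auto
qed

lemma TAU_nonneg: assumes "adm N b w" "jex N w c" "0 \<le> c" shows "0 \<le> TAU N b w c"
proof -
  obtain j where j: "j\<in>{JJ N w c..<N}" "vl b w j = TAU N b w c" using TAU_max(1)[OF assms(2,3)] by blast
  have "1 \<le> j" "j < N" using j JJ[OF assms(2,3)] by auto
  then show ?thesis using vl_nonneg[OF assms(1)] j by metis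
qed

lemma LAM_pos: "good N b w c \<Longrightarrow> 0 < LAM N b w c"
  unfolding good_def LAM_def by simp

lemma vl_exp: assumes "adm N b w" "1 \<le> j" "j < N" "0 < b j" "b j < 1"
  shows "exp (2 * (- ln (b j)) * vl b w j) = 1 + WW w j"
proof -
  have "0 < - ln (b j)" using assms by simp
  moreover have "0 < 1 + WW w j" using WW_nonneg[OF assms(1,3)] by simp
  ultimately show ?thesis using assms(4) unfolding vl_def by simp
qed


lemma LB: assumes adm: "adm N b w" and g: "good N b w c" and c: "0 < c" and m: "real m \<le> TAU N b w c"
  shows "c / (1 + c) * exp (2 * LAM N b w c * (TAU N b w c - m)) \<le> DD N b w m"
proof -
  have jex: "jex N w c" using g by (simp add: good_def)
  note J = JJ[OF jex less_imp_le[OF c]]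
  obtain j where j: "j \<in> {JJ N w c..<N}" "vl b w j = TAU N b w c" using TAU_max[OF jex less_imp_le[OF c]] by blast
  have j1: "1 \<le> j" "j < N" using j J by auto
  have bj: "b j \<le> b (JJ N w c)" using adm_mono[OF adm] J j by auto
  show ?thesis
  proof (cases "b j = 0")
    case True
    then have "TAU N b w c = 0" using j by (simp add: vl_def)
    then have m0: "m = 0" using m by simp
    have "c \<le> DD N b w 0" using LB0[OF adm jex, of 0] c by simp
    moreover have "c / (1+c) \<le> c" using c by (simp add: divide_le_eq)
    ultimately show ?thesis using m0 \<open>TAU N b w c = 0\<close> by simp
  next
    case False
    then have bj0: "0 < b j" using adm_b0[OF adm j1] by simp
    have bj1: "b j < 1" using bj g by (simp add: good_def)
    define l where "l = - ln (b j)"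
    have lpos: "LAM N b w c \<le> l" unfolding l_def LAM_def using bj bj0 by simp
    have e: "exp (2 * l * TAU N b w c) = 1 + WW w j" using vl_exp[OF adm j1 bj0 bj1] j by (simp add: l_def)
    have W: "c < WW w j" using J WW_mono[OF adm, of "JJ N w c" j] j by auto
    have "exp (real (2*m) * ln (b j)) = b j ^ (2*m)" by (subst exp_of_nat_mult) (simp add: bj0)
    then have bpow: "b j ^ (2*m) = exp (- 2 * l * m)" unfolding l_def by (simp add: algebra_simps)
    have Wp: "0 < WW w j" using W c by simp
    have e1: "c / (1 + c) = 1 - 1 / (1 + c)" using c by (simp add: field_simps)
    have e2: "WW w j / (1 + WW w j) = 1 - 1 / (1 + WW w j)" using Wp by (simp add: field_simps)
    have "1 / (1 + WW w j) \<le> 1 / (1 + c)" using W c by (intro divide_left_mono) auto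
    then have cW: "c / (1 + c) \<le> WW w j / (1 + WW w j)" unfolding e1 e2 by simp
    have W0: "0 \<le> WW w j / (1 + WW w j)" using Wp by simp
    have "c / (1 + c) * exp (2 * LAM N b w c * (TAU N b w c - m)) \<le> WW w j / (1 + WW w j) * exp (2 * l * (TAU N b w c - m))"
    proof (rule mult_mono)
      show "exp (2 * LAM N b w c * (TAU N b w c - m)) \<le> exp (2 * l * (TAU N b w c - m))"
        using lpos m by (simp add: mult_right_mono)
    qed (use W0 cW c in auto)
    also have "exp (2 * l * (TAU N b w c - m)) = exp (2 * l * TAU N b w c) * exp (- 2 * l * m)"
      by (simp add: exp_add[symmetric] algebra_simps)
    also have "WW w j / (1 + WW w j) * (exp (2 * l * TAU N b w c) * exp (- 2 * l * m)) = WW w j * exp (- 2 * l * m)"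
      unfolding e using Wp by simp
    also have "\<dots> \<le> DD N b w m" using LBj[OF adm j1, of m] bpow by simp
    finally show ?thesis .
  qed
qed

lemma pow_exp: "0 < (x::real) \<Longrightarrow> x ^ n = exp (real n * ln x)"
  by (subst exp_of_nat_mult) simp

lemma UBtail: assumes adm: "adm N b w" and g: "good N b w c" and c: "0 < c" and m: "TAU N b w c < real m"
  shows "(\<Sum>i\<in>{JJ N w c..<N}. w i * b i ^ (2*m)) \<le> m / (m - TAU N b w c) * exp (- 2 * LAM N b w c * (m - TAU N b w c))"
proof -
  have jex: "jex N w c" using g by (simp add: good_def)
  note J = JJ[OF jex less_imp_le[OF c]]
  define T where "T = TAU N b w c"
  define JJc where "JJc = JJ N w c"
  have T0: "0 \<le> T" unfolding T_def using TAU_nonneg[OF adm jex] c by simp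
  have mpos: "0 < real m" using T0 m T_def by linarith
  define r where "r = T / m"
  have r: "0 \<le> r" "r < 1" unfolding r_def using T0 mpos m T_def by (auto simp: divide_less_eq)
  have bJ: "0 < b JJc" "b JJc < 1" using g by (auto simp: good_def JJc_def)
  have main: "(\<Sum>i\<in>{JJc..N-1}. w i * b i ^ (2*m)) \<le> (b JJc ^ (2*m)) powr (1-r) / (1-r)"
  proof (rule abel[where A = "WW w (JJc - 1)"])
    show "JJc \<le> N - 1" using J by (simp add: JJc_def)
    show "\<And>i. JJc \<le> i \<Longrightarrow> i \<le> N - 1 \<Longrightarrow> 0 \<le> b i ^ (2 * m)"
      using J by (auto intro!: adm_pow[OF adm] simp: JJc_def)
    show "\<And>i. JJc \<le> i \<Longrightarrow> i < N - 1 \<Longrightarrow> b (Suc i) ^ (2 * m) \<le> b i ^ (2 * m)"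
    proof -
      fix i assume i: "JJc \<le> i" "i < N - 1"
      have "b (Suc i) \<le> b i" using adm i J by (auto simp: adm_def JJc_def)
      moreover have "0 \<le> b (Suc i)" using adm i J by (auto simp: adm_def JJc_def)
      ultimately show "b (Suc i) ^ (2 * m) \<le> b i ^ (2 * m)" by (rule power_mono)
    qed
    show "\<And>i. JJc \<le> i \<Longrightarrow> i \<le> N - 1 \<Longrightarrow> 0 \<le> w i"
      using J by (auto intro!: adm_w[OF adm] simp: JJc_def)
    show "0 \<le> WW w (JJc - 1)" using WW_nonneg[OF adm] J by (simp add: JJc_def)
    show "0 \<le> r" "r < 1" by (fact r)+
    fix i assume i: "JJc \<le> i" "i \<le> N - 1" and xi: "0 < b i ^ (2 * m)"
    have i1: "1 \<le> i" "i < N" using i J by (auto simp: JJc_def)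
    have Wsplit: "WW w (JJc - 1) + (\<Sum>j\<in>{JJc..i}. w j) = WW w i"
    proof -
      have "{1..i} = {1..JJc - 1} \<union> {JJc..i}" using i J by (auto simp: JJc_def)
      moreover have "{1..JJc - 1} \<inter> {JJc..i} = {}" by auto
      ultimately show ?thesis unfolding WW_def by (simp add: sum.union_disjoint)
    qed
    have bi0: "0 < b i"
    proof (rule ccontr)
      assume "\<not> 0 < b i" then have "b i = 0" using adm_b0[OF adm i1] by simp
      moreover have "2*m \<noteq> 0" using mpos by simp
      ultimately show False using xi by (simp add: zero_power)
    qed
    have bi1: "b i < 1" using adm_mono[OF adm, of JJc i] i1 i J bJ by (simp add: JJc_def)
    define l where "l = - ln (b i)"
    have lpos: "0 < l" using bi0 bi1 unfolding l_def by simp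
    have "1 + WW w i = exp (2 * l * vl b w i)" using vl_exp[OF adm i1 bi0 bi1] by (simp add: l_def)
    also have "\<dots> \<le> exp (2 * l * T)"
      using TAU_max(2)[OF jex less_imp_le[OF c], of i] i i1 lpos by (simp add: T_def JJc_def)
    also have "exp (2 * l * T) = (b i ^ (2 * m)) powr (-r)"
    proof -
      have "(b i ^ (2 * m)) powr (-r) = exp (- r * ln (b i ^ (2*m)))" using bi0 by (simp add: powr_def)
      also have "ln (b i ^ (2*m)) = real (2*m) * ln (b i)" using bi0 by (simp add: ln_realpow)
      also have "- r * (real (2*m) * ln (b i)) = 2 * l * T" unfolding r_def l_def using mpos by (simp add: field_simps)
      finally show ?thesis by simp
    qed
    finally show "WW w (JJc - 1) + (\<Sum>j\<in>{JJc..i}. w j) \<le> (b i ^ (2 * m)) powr (-r)"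
      unfolding Wsplit by simp
  qed
  have "{JJc..N-1} = {JJc..<N}" using J by (auto simp: JJc_def)
  moreover have "(b JJc ^ (2*m)) powr (1-r) / (1-r) = m / (m - T) * exp (- 2 * LAM N b w c * (m - T))"
  proof -
    have "(b JJc ^ (2*m)) powr (1-r) = exp ((1-r) * ln (b JJc ^ (2*m)))" using bJ by (simp add: powr_def)
    also have "ln (b JJc ^ (2*m)) = real (2*m) * ln (b JJc)" using bJ by (simp add: ln_realpow)
    also have "(1-r) * (real (2*m) * ln (b JJc)) = - 2 * LAM N b w c * (m - T)"
      unfolding r_def LAM_def JJc_def[symmetric] using mpos by (simp add: field_simps)
    finally have e: "(b JJc ^ (2*m)) powr (1-r) = exp (- 2 * LAM N b w c * (m - T))" .
    have "1 / (1 - r) = m / (m - T)" unfolding r_def using mpos m T_def by (simp add: field_simps)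
    then show ?thesis unfolding e by (metis times_divide_eq_left mult.commute mult_1)
  qed
  ultimately show ?thesis using main by (simp add: T_def JJc_def)
qed

lemma TAU_mono: assumes adm: "adm N b w" and jex: "jex N w c" and c1: "0 < c1" "c1 \<le> c"
  shows "TAU N b w c \<le> TAU N b w c1"
proof -
  note JM = JJ_mono[OF jex c1 adm]
  note J = JJ[OF jex] JJ[OF JM(1)]
  show ?thesis unfolding TAU_def
    by (rule Max_mono) (use JM J c1 in auto)
qed

lemma TAU_eq: assumes adm: "adm N b w" and jex: "jex N w c" and c1: "0 < c1" "c1 \<le> c"
  and g1: "good N b w c1" and big: "ln (1 + c) / (2 * LAM N b w c1) < TAU N b w c1"
  shows "TAU N b w c1 = TAU N b w c"
proof -
  note JM = JJ_mono[OF jex c1 adm]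
  have c0: "0 \<le> c" "0 \<le> c1" using c1 by auto
  note J = JJ[OF jex c0(1)]
  note J1 = JJ[OF JM(1) c0(2)]
  obtain j where j: "j \<in> {JJ N w c1..<N}" "vl b w j = TAU N b w c1" using TAU_max(1)[OF JM(1) c0(2)] by blast
  have j1: "1 \<le> j" "j < N" using j J1 by auto
  have L1: "0 < LAM N b w c1" using LAM_pos[OF g1] .
  have "j \<ge> JJ N w c"
  proof (rule ccontr)
    assume "\<not> JJ N w c \<le> j"
    then have jl: "j \<le> JJ N w c - 1" by simp
    have "vl b w j \<le> ln (1 + c) / (2 * LAM N b w c1)"
    proof (cases "b j = 0")
      case True then show ?thesis using L1 c0 by (simp add: vl_def)
    next
      case False
      then have bj0: "0 < b j" using adm_b0[OF adm j1] by simp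
      have bj: "b j \<le> b (JJ N w c1)" using adm_mono[OF adm, of "JJ N w c1" j] J1 j by auto
      have lj: "LAM N b w c1 \<le> - ln (b j)" unfolding LAM_def using bj bj0 by simp
      have Wj: "WW w j \<le> c" using WW_mono[OF adm jl] J by linarith
      have "ln (1 + WW w j) \<le> ln (1 + c)" using Wj WW_nonneg[OF adm j1(2)] by simp
      then have "ln (1 + WW w j) / (2 * (- ln (b j))) \<le> ln (1 + c) / (2 * LAM N b w c1)"
        using lj L1 WW_nonneg[OF adm j1(2)] c0 by (intro frac_le) auto
      then show ?thesis using False by (simp add: vl_def)
    qed
    then show False using j big by simp
  qed
  then have "vl b w j \<le> TAU N b w c" using j by (intro TAU_max(2)[OF jex c0(1)]) auto
  then have "TAU N b w c1 \<le> TAU N b w c" using j by simp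
  then show ?thesis using TAU_mono[OF adm jex c1] by simp
qed

lemma UB: assumes adm: "adm N b w" and g: "good N b w c" and c1: "0 < c1" "c1 \<le> c"
  and m: "TAU N b w c < real m"
  shows "DD N b w m \<le> c1 + c * b (JJ N w c1) ^ (2*m) + m / (m - TAU N b w c) * exp (- 2 * LAM N b w c * (m - TAU N b w c))"
proof -
  have jex: "jex N w c" using g by (simp add: good_def)
  note JM = JJ_mono[OF jex c1 adm]
  have c0: "0 \<le> c" "0 \<le> c1" using c1 by auto
  note J = JJ[OF jex c0(1)]
  note J1 = JJ[OF JM(1) c0(2)]
  have "DD N b w m \<le> WW w (JJ N w c1 - 1) + WW w (JJ N w c - 1) * b (JJ N w c1) ^ (2*m) + (\<Sum>i\<in>{JJ N w c..<N}. w i * b i ^ (2*m))"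
    by (rule split3[OF adm]) (use J J1 JM in auto)
  moreover have "WW w (JJ N w c - 1) * b (JJ N w c1) ^ (2*m) \<le> c * b (JJ N w c1) ^ (2*m)"
    using J J1 by (intro mult_right_mono) (auto intro: adm_pow[OF adm])
  ultimately show ?thesis using UBtail[OF adm g _ m] J1 c1 by linarith
qed

lemma UBshift: assumes adm: "adm N b w" and jex: "jex N w c" and c1: "0 < c1" "c1 \<le> c"
  shows "DD N b w (m + k) \<le> c1 + c * b (JJ N w c1) ^ (2*m) + b (JJ N w c) ^ (2*k) * DD N b w m"
proof -
  note JM = JJ_mono[OF jex c1 adm]
  have c0: "0 \<le> c" "0 \<le> c1" using c1 by auto
  note J = JJ[OF jex c0(1)]
  note J1 = JJ[OF JM(1) c0(2)]
  have "DD N b w (m+k) \<le> WW w (JJ N w c1 - 1) + WW w (JJ N w c - 1) * b (JJ N w c1) ^ (2*(m+k)) + (\<Sum>i\<in>{JJ N w c..<N}. w i * b i ^ (2*(m+k)))"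
    by (rule split3[OF adm]) (use J J1 JM in auto)
  moreover have "WW w (JJ N w c - 1) * b (JJ N w c1) ^ (2*(m+k)) \<le> c * b (JJ N w c1) ^ (2*m)"
  proof -
    have "b (JJ N w c1) ^ (2*(m+k)) \<le> b (JJ N w c1) ^ (2*m)"
      by (rule power_decreasing) (use J1 in \<open>auto intro: adm_b0[OF adm] adm_b1[OF adm]\<close>)
    moreover have "0 \<le> WW w (JJ N w c - 1)" using WW_nonneg[OF adm] J by simp
    ultimately have "WW w (JJ N w c - 1) * b (JJ N w c1) ^ (2*(m+k)) \<le> WW w (JJ N w c - 1) * b (JJ N w c1) ^ (2*m)"
      by (rule mult_left_mono)
    also have "\<dots> \<le> c * b (JJ N w c1) ^ (2*m)"
      using J J1 by (intro mult_right_mono) (auto intro: adm_pow[OF adm])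
    finally show ?thesis .
  qed
  moreover have "(\<Sum>i\<in>{JJ N w c..<N}. w i * b i ^ (2*(m+k))) \<le> b (JJ N w c) ^ (2*k) * DD N b w m"
    by (rule tail_shift[OF adm]) (use J in auto)
  ultimately show ?thesis using J1 by linarith
qed



lemma completeness:
  fixes S :: "'a set" and phi :: "nat \<Rightarrow> 'a \<Rightarrow> real" and pp :: "'a \<Rightarrow> real"
  assumes fin: "finite S"
    and orth: "\<And>i k. i < card S \<Longrightarrow> k < card S \<Longrightarrow> (\<Sum>x\<in>S. phi i x * phi k x * pp x) = (if i = k then 1 else 0)"
    and x: "x \<in> S" and y: "y \<in> S"
  shows "(\<Sum>i<card S. pp x * phi i x * phi i y) = (if x = y then 1 else 0)"
proof -
  define N where "N = card S"
  obtain e where e: "bij_betw e {0..<N} S" using ex_bij_betw_nat_finite[OF fin] unfolding N_def by blast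
  define A :: "real mat" where "A = mat N N (\<lambda>(i,k). phi i (e k))"
  define B :: "real mat" where "B = mat N N (\<lambda>(k,j). pp (e k) * phi j (e k))"
  have A: "A \<in> carrier_mat N N" and B: "B \<in> carrier_mat N N" by (auto simp: A_def B_def)
  have reidx: "(\<Sum>k<N. f (e k)) = (\<Sum>x\<in>S. f x)" for f :: "'a \<Rightarrow> real"
  proof -
    have "(\<Sum>x\<in>S. f x) = (\<Sum>k\<in>{0..<N}. f (e k))" by (rule sum.reindex_bij_betw[OF e, symmetric])
    then show ?thesis by (simp add: atLeast0LessThan)
  qed
  have AB: "A * B = 1\<^sub>m N"
  proof (rule eq_matI)
    fix i j assume ij: "i < dim_row (1\<^sub>m N)" "j < dim_col (1\<^sub>m N)"
    then have ij': "i < N" "j < N" by auto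
    have "(A * B) $$ (i, j) = (\<Sum>k<N. phi i (e k) * (pp (e k) * phi j (e k)))"
      using ij' by (simp add: A_def B_def scalar_prod_def atLeast0LessThan)
    also have "\<dots> = (\<Sum>x\<in>S. phi i x * phi j x * pp x)"
      using reidx[of "\<lambda>x. phi i x * phi j x * pp x"] by (simp add: algebra_simps)
    also have "\<dots> = 1\<^sub>m N $$ (i, j)" using orth ij' by (simp add: N_def)
    finally show "(A * B) $$ (i, j) = 1\<^sub>m N $$ (i, j)" .
  qed (auto simp: A_def B_def)
  have BA: "B * A = 1\<^sub>m N" using mat_mult_left_right_inverse[OF A B AB] .
  have im: "e ` {0..<N} = S" using bij_betw_imp_surj_on[OF e] .
  have inj: "inj_on e {0..<N}" using bij_betw_imp_inj_on[OF e] .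
  obtain k where k: "k < N" "e k = x" using x im by (metis atLeastLessThan_iff imageE)
  obtain l where l: "l < N" "e l = y" using y im by (metis atLeastLessThan_iff imageE)
  have "(B * A) $$ (k, l) = (\<Sum>i<N. pp (e k) * phi i (e k) * phi i (e l))"
    using k l by (simp add: A_def B_def scalar_prod_def atLeast0LessThan)
  moreover have "(B * A) $$ (k, l) = (if k = l then 1 else 0)" using BA k l by simp
  moreover have "(k = l) = (x = y)" using inj_onD[OF inj, of k l] k l by auto
  ultimately show ?thesis using k l by (simp add: N_def)
qed

context
  fixes S :: "'a set" and K :: "'a \<Rightarrow> 'a \<Rightarrow> real" and pp mu :: "'a \<Rightarrow> real"
    and beta :: "nat \<Rightarrow> real" and phi :: "nat \<Rightarrow> 'a \<Rightarrow> real"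
  assumes ch: "irred_reversible_chain S K pp" and init: "is_prob S mu"
    and eig: "ordered_eigenbasis S K pp beta phi"
begin

lemma fin: "finite S" and Sne: "S \<noteq> {}" using ch by (auto simp: irred_reversible_chain_def)
lemma ppos: "x \<in> S \<Longrightarrow> 0 < pp x" using ch by (auto simp: irred_reversible_chain_def)
lemma rev: "x \<in> S \<Longrightarrow> y \<in> S \<Longrightarrow> pp x * K x y = pp y * K y x"
  using ch by (auto simp: irred_reversible_chain_def)
lemma Knn: "x \<in> S \<Longrightarrow> y \<in> S \<Longrightarrow> 0 \<le> K x y"
  using ch by (auto simp: irred_reversible_chain_def stochastic_def)
lemma Krow: "x \<in> S \<Longrightarrow> (\<Sum>y\<in>S. K x y) = 1"
  using ch by (auto simp: irred_reversible_chain_def stochastic_def)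
lemma eigv: "i < card S \<Longrightarrow> x \<in> S \<Longrightarrow> (\<Sum>y\<in>S. K x y * phi i y) = beta i * phi i x"
  using eig by (auto simp: ordered_eigenbasis_def)
lemma orth: "i < card S \<Longrightarrow> k < card S \<Longrightarrow> (\<Sum>x\<in>S. phi i x * phi k x * pp x) = (if i = k then 1 else 0)"
  using eig by (auto simp: ordered_eigenbasis_def)
lemma phi0: "x \<in> S \<Longrightarrow> phi 0 x = 1" and beta0: "beta 0 = 1"
  using eig by (auto simp: ordered_eigenbasis_def)
lemma mu1: "(\<Sum>x\<in>S. mu x) = 1" using init by (simp add: is_prob_def)

lemma compl: "x \<in> S \<Longrightarrow> y \<in> S \<Longrightarrow> (\<Sum>i<card S. pp x * phi i x * phi i y) = (if x = y then 1 else 0)"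
  by (rule completeness[OF fin orth])

lemma left_eig: assumes i: "i < card S" and y: "y \<in> S"
  shows "(\<Sum>x\<in>S. pp x * phi i x * K x y) = beta i * (pp y * phi i y)"
proof -
  have "(\<Sum>x\<in>S. pp x * phi i x * K x y) = (\<Sum>x\<in>S. pp y * (K y x * phi i x))"
    by (rule sum.cong) (use rev y in \<open>auto simp: algebra_simps\<close>)
  also have "\<dots> = pp y * (beta i * phi i y)" using eigv[OF i y] by (simp add: sum_distrib_left[symmetric])
  finally show ?thesis by simp
qed

lemma left_eig_pow: assumes i: "i < card S"
  shows "y \<in> S \<Longrightarrow> (\<Sum>x\<in>S. pp x * phi i x * kpow S K m x y) = beta i ^ m * (pp y * phi i y)"
proof (induction m arbitrary: y)
  case 0
  have "(\<Sum>x\<in>S. pp x * phi i x * kpow S K 0 x y) = (\<Sum>x\<in>S. if x = y then pp x * phi i x else 0)"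
    by (rule sum.cong) auto
  also have "\<dots> = pp y * phi i y" using 0 fin by (simp add: sum.delta')
  finally show ?case by simp
next
  case (Suc m)
  have "(\<Sum>x\<in>S. pp x * phi i x * kpow S K (Suc m) x y) = (\<Sum>x\<in>S. \<Sum>z\<in>S. pp x * phi i x * kpow S K m x z * K z y)"
    by (simp add: sum_distrib_left mult.assoc)
  also have "\<dots> = (\<Sum>z\<in>S. (\<Sum>x\<in>S. pp x * phi i x * kpow S K m x z) * K z y)"
    by (subst sum.swap) (simp add: sum_distrib_right)
  also have "\<dots> = (\<Sum>z\<in>S. beta i ^ m * (pp z * phi i z * K z y))"
    by (rule sum.cong) (use Suc.IH in \<open>auto simp: algebra_simps\<close>)
  also have "\<dots> = beta i ^ m * (beta i * (pp y * phi i y))"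
    using left_eig[OF i Suc.prems] by (simp add: sum_distrib_left[symmetric])
  finally show ?case by simp
qed

lemma mu_exp: assumes x: "x \<in> S" shows "mu x = (\<Sum>i<card S. coef S mu (phi i) * (pp x * phi i x))"
proof -
  have "(\<Sum>i<card S. coef S mu (phi i) * (pp x * phi i x)) = (\<Sum>i<card S. \<Sum>z\<in>S. mu z * (pp x * phi i x * phi i z))"
    unfolding coef_def sum_distrib_right by (intro sum.cong refl) (simp add: algebra_simps)
  also have "\<dots> = (\<Sum>z\<in>S. mu z * (\<Sum>i<card S. pp x * phi i x * phi i z))"
    by (subst sum.swap) (simp add: sum_distrib_left)
  also have "\<dots> = (\<Sum>z\<in>S. if z = x then mu z else 0)"
    by (rule sum.cong) (use compl x in auto)
  also have "\<dots> = mu x" using x fin by (simp add: sum.delta')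
  finally show ?thesis by simp
qed

lemma dist_exp: assumes y: "y \<in> S"
  shows "distK S K mu m y = (\<Sum>i<card S. coef S mu (phi i) * beta i ^ m * (pp y * phi i y))"
proof -
  have "distK S K mu m y = (\<Sum>x\<in>S. (\<Sum>i<card S. coef S mu (phi i) * (pp x * phi i x)) * kpow S K m x y)"
    unfolding distK_def by (rule sum.cong) (use mu_exp in auto)
  also have "\<dots> = (\<Sum>i<card S. coef S mu (phi i) * (\<Sum>x\<in>S. pp x * phi i x * kpow S K m x y))"
    by (simp add: sum_distrib_right sum_distrib_left algebra_simps sum.swap[of _ S])
  also have "\<dots> = (\<Sum>i<card S. coef S mu (phi i) * (beta i ^ m * (pp y * phi i y)))"
    by (rule sum.cong) (use left_eig_pow y in auto)
  finally show ?thesis by (simp add: algebra_simps)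
qed

lemma ratio_exp: assumes y: "y \<in> S"
  shows "distK S K mu m y / pp y = (\<Sum>i<card S. coef S mu (phi i) * beta i ^ m * phi i y)"
  using dist_exp[OF y] ppos[OF y] by (simp add: sum_divide_distrib mult.assoc)

lemma parseval: assumes I: "I \<subseteq> {..<card S}"
  shows "(\<Sum>y\<in>S. (\<Sum>i\<in>I. a i * phi i y)^2 * pp y) = (\<Sum>i\<in>I. (a i)^2)"
proof -
  have fI: "finite I" using I finite_subset by blast
  have "(\<Sum>y\<in>S. (\<Sum>i\<in>I. a i * phi i y)^2 * pp y) = (\<Sum>y\<in>S. \<Sum>i\<in>I. \<Sum>k\<in>I. a i * a k * (phi i y * phi k y * pp y))"
    by (simp add: power2_eq_square sum_distrib_left sum_distrib_right algebra_simps)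
  also have "\<dots> = (\<Sum>i\<in>I. \<Sum>k\<in>I. a i * a k * (\<Sum>y\<in>S. phi i y * phi k y * pp y))"
    by (simp add: sum_distrib_left sum.swap[of _ S])
  also have "\<dots> = (\<Sum>i\<in>I. \<Sum>k\<in>I. if k = i then a i * a k else 0)"
  proof (rule sum.cong[OF refl], rule sum.cong[OF refl])
    fix i k assume ik: "i \<in> I" "k \<in> I"
    then have "i < card S" "k < card S" using I by auto
    then show "a i * a k * (\<Sum>y\<in>S. phi i y * phi k y * pp y) = (if k = i then a i * a k else 0)"
      using orth[of i k] by auto
  qed
  also have "\<dots> = (\<Sum>i\<in>I. (a i)^2)" using fI by (simp add: sum.delta power2_eq_square)
  finally show ?thesis .
qed

lemma coef0: "coef S mu (phi 0) = 1" unfolding coef_def using mu1 phi0 by simp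

lemma N1: "0 < card S" using fin Sne by (simp add: card_gt_0_iff)

lemma lessThan_split: "{..<card S} = insert 0 {1..<card S}" using N1 by auto

lemma d2_eq: "d2 S K pp mu m = sqrt (DD (card S) (\<lambda>i. \<bar>beta i\<bar>) (\<lambda>i. (coef S mu (phi i))^2) m)"
proof -
  have "\<And>y. y \<in> S \<Longrightarrow> distK S K mu m y / pp y - 1 = (\<Sum>i\<in>{1..<card S}. coef S mu (phi i) * beta i ^ m * phi i y)"
    using ratio_exp lessThan_split coef0 beta0 phi0 by simp
  then have "(\<Sum>y\<in>S. (distK S K mu m y / pp y - 1)^2 * pp y) = (\<Sum>y\<in>S. (\<Sum>i\<in>{1..<card S}. (coef S mu (phi i) * beta i ^ m) * phi i y)^2 * pp y)"
    by (intro sum.cong) auto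
  also have "\<dots> = (\<Sum>i\<in>{1..<card S}. (coef S mu (phi i) * beta i ^ m)^2)" by (rule parseval) auto
  also have "\<dots> = DD (card S) (\<lambda>i. \<bar>beta i\<bar>) (\<lambda>i. (coef S mu (phi i))^2) m"
    unfolding DD_def by (rule sum.cong) (auto simp: power_mult_distrib power_mult[symmetric] power_even_abs mult.commute)
  finally show ?thesis unfolding d2_def by simp
qed

lemma osn_eq: "one_step_norm S K pp mu = 1 + DD (card S) (\<lambda>i. \<bar>beta i\<bar>) (\<lambda>i. (coef S mu (phi i))^2) 1"
proof -
  have "one_step_norm S K pp mu = (\<Sum>y\<in>S. (distK S K mu 1 y / pp y)^2 * pp y)"
    unfolding one_step_norm_def by (rule sum.cong) (use ppos in \<open>auto simp: power2_eq_square\<close>)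
  also have "\<dots> = (\<Sum>y\<in>S. (\<Sum>i<card S. (coef S mu (phi i) * beta i ^ 1) * phi i y)^2 * pp y)"
    by (intro sum.cong) (use ratio_exp in auto)
  also have "\<dots> = (\<Sum>i<card S. (coef S mu (phi i) * beta i ^ 1)^2)" by (rule parseval) auto
  also have "\<dots> = 1 + (\<Sum>i\<in>{1..<card S}. (coef S mu (phi i) * beta i)^2)"
    unfolding lessThan_split using coef0 beta0 by simp
  also have "(\<Sum>i\<in>{1..<card S}. (coef S mu (phi i) * beta i)^2) = DD (card S) (\<lambda>i. \<bar>beta i\<bar>) (\<lambda>i. (coef S mu (phi i))^2) 1"
    unfolding DD_def by (rule sum.cong) (auto simp: power_mult_distrib)
  finally show ?thesis .
qed

lemma beta_le1: assumes i: "i < card S" shows "\<bar>beta i\<bar> \<le> 1"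
proof -
  define M where "M = Max ((\<lambda>x. \<bar>phi i x\<bar>) ` S)"
  have "M \<in> (\<lambda>x. \<bar>phi i x\<bar>) ` S" unfolding M_def by (rule Max_in) (use fin Sne in auto)
  then obtain x where x: "x \<in> S" "\<bar>phi i x\<bar> = M" by auto
  have Mge: "\<And>y. y \<in> S \<Longrightarrow> \<bar>phi i y\<bar> \<le> M" unfolding M_def using fin by auto
  have Mpos: "0 < M"
  proof (rule ccontr)
    assume "\<not> 0 < M"
    then have "\<And>y. y \<in> S \<Longrightarrow> phi i y = 0" using Mge by (metis abs_ge_zero abs_le_zero_iff order_trans not_less)
    then have "(\<Sum>x\<in>S. phi i x * phi i x * pp x) = 0" by simp
    then show False using orth[OF i i] by simp
  qed
  have "\<bar>beta i\<bar> * M = \<bar>\<Sum>y\<in>S. K x y * phi i y\<bar>" using eigv[OF i x(1)] x(2) by (simp add: abs_mult)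
  also have "\<dots> \<le> (\<Sum>y\<in>S. \<bar>K x y * phi i y\<bar>)" by (rule sum_abs)
  also have "\<dots> \<le> (\<Sum>y\<in>S. K x y * M)"
    by (rule sum_mono) (use Knn x Mge in \<open>auto simp: abs_mult intro!: mult_left_mono\<close>)
  also have "\<dots> = M" using Krow[OF x(1)] by (simp add: sum_distrib_right[symmetric])
  finally show ?thesis using Mpos by (simp add: mult_le_cancel_right1)
qed

lemma adm_spec: "adm (card S) (\<lambda>i. \<bar>beta i\<bar>) (\<lambda>i. (coef S mu (phi i))^2)"
  unfolding adm_def using beta_le1 eig by (auto simp: ordered_eigenbasis_def)

end



locale fam =
  fixes N :: "nat \<Rightarrow> nat" and b w :: "nat \<Rightarrow> nat \<Rightarrow> real"
  assumes adm: "\<And>n. adm (N n) (b n) (w n)"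
    and Dinf: "filterlim (\<lambda>n. DD (N n) (b n) (w n) 1) at_top sequentially"
begin

abbreviation "D n m \<equiv> DD (N n) (b n) (w n) m"
abbreviation "JN n c \<equiv> JJ (N n) (w n) c"
abbreviation "tau n c \<equiv> TAU (N n) (b n) (w n) c"
abbreviation "lam n c \<equiv> LAM (N n) (b n) (w n) c"
abbreviation "gd n c \<equiv> good (N n) (b n) (w n) c"
abbreviation "jx n c \<equiv> jex (N n) (w n) c"

lemma ev_D1: "eventually (\<lambda>n. K < D n 1) sequentially"
  using Dinf unfolding filterlim_at_top_dense by blast

lemma jex_ev: assumes c: "0 < c" shows "eventually (\<lambda>n. jx n c \<and> 0 < b n (JN n c)) sequentially"
  using ev_D1[of c]
proof eventually_elim
  case (elim n)
  note a = adm[of n]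
  have ne: "{1..<N n} \<noteq> {}"
  proof
    assume "{1..<N n} = {}" then have "D n 1 = 0" by (simp add: DD_def)
    then show False using elim c by simp
  qed
  then have N2: "1 \<le> N n - 1" "N n - 1 < N n" by auto
  have "D n 1 \<le> WW (w n) (N n - 1)"
  proof -
    have "D n 1 \<le> (\<Sum>i\<in>{1..<N n}. w n i)" unfolding DD_def
    proof (rule sum_mono)
      fix i assume i: "i \<in> {1..<N n}"
      have "b n i ^ 2 \<le> 1" using i a by (auto intro!: power_le_one adm_b0 adm_b1)
      then show "w n i * b n i ^ (2*1) \<le> w n i" using adm_w[OF a, of i] i mult_left_le[of "b n i ^ 2" "w n i"] by auto
    qed
    moreover have "{1..<N n} = {1..N n - 1}" using N2 by auto
    ultimately show ?thesis unfolding WW_def by simp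
  qed
  then have jx: "jx n c" unfolding jex_def using elim N2 by (intro exI[of _ "N n - 1"]) auto
  note J = JJ[OF jx less_imp_le[OF c]]
  have "0 < b n (JN n c)"
  proof (rule ccontr)
    assume "\<not> 0 < b n (JN n c)"
    then have b0: "b n (JN n c) = 0" using adm_b0[OF a] J by force
    have "D n 1 \<le> WW (w n) (JN n c - 1) + WW (w n) (JN n c - 1) * b n (JN n c) ^ (2*1) + (\<Sum>i\<in>{JN n c..<N n}. w n i * b n i ^ (2*1))"
      by (rule split3[OF a]) (use J in auto)
    moreover have "(\<Sum>i\<in>{JN n c..<N n}. w n i * b n i ^ (2*1)) = 0"
    proof (rule sum.neutral, rule ballI)
      fix i assume i: "i \<in> {JN n c..<N n}"
      have "b n i \<le> 0" using adm_mono[OF a, of "JN n c" i] J i b0 by auto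
      then have "b n i = 0" using adm_b0[OF a, of i] J i by auto
      then show "w n i * b n i ^ (2*1) = 0" by simp
    qed
    ultimately have "D n 1 \<le> c" using J b0 by simp
    then show False using elim by simp
  qed
  then show ?case using jx by simp
qed

lemma tau_half: assumes c: "0 < c" and g: "eventually (\<lambda>n. gd n c) sequentially"
  shows "eventually (\<lambda>n. 1/2 < tau n c) sequentially"
  using g ev_D1[of "2*c+2"]
proof eventually_elim
  case (elim n)
  note a = adm[of n]
  show ?case
  proof (rule ccontr)
    assume "\<not> 1/2 < tau n c"
    then have t: "tau n c \<le> 1/2" by simp
    have "D n 1 \<le> c + c * b n (JN n c) ^ (2*1) + 1 / (1 - tau n c) * exp (- 2 * lam n c * (1 - tau n c))"
      using UB[OF a elim(1) c order_refl, of 1] t by simp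
    moreover have "c * b n (JN n c) ^ (2*1) \<le> c"
    proof -
      have "b n (JN n c) ^ 2 \<le> 1" using elim(1) unfolding good_def
        by (intro power_le_one) auto
      then show ?thesis using c mult_left_le[of "b n (JN n c) ^ 2" c] by simp
    qed
    moreover have "1 / (1 - tau n c) \<le> 2" using t by (simp add: divide_le_eq)
    moreover have "exp (- 2 * lam n c * (1 - tau n c)) \<le> 1"
      using LAM_pos[OF elim(1)] t by simp
    moreover have "1 / (1 - tau n c) * exp (- 2 * lam n c * (1 - tau n c)) \<le> 2 * 1"
      by (intro mult_mono) (use t LAM_pos[OF elim(1)] in \<open>auto simp: divide_le_eq\<close>)
    ultimately have "D n 1 \<le> c + c + 2 * 1" by linarith
    then show False using elim by simp
  qed
qed

lemma le_max_div: "0 < (k::real) \<Longrightarrow> x \<le> k * max y (x / k)"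
proof -
  assume k: "0 < k"
  have "x = k * (x / k)" using k by simp
  also have "\<dots> \<le> k * max y (x / k)" using k by (intro mult_left_mono) auto
  finally show ?thesis .
qed

lemma ln_le_exp: "0 < (x::real) \<Longrightarrow> ln x \<le> y \<Longrightarrow> x \<le> exp y"
  by (metis exp_le_cancel_iff exp_ln)

lemma le_ln: "exp (y::real) \<le> q \<Longrightarrow> y \<le> ln q"
proof -
  assume a: "exp y \<le> q"
  have q: "0 < q" using a exp_gt_zero[of y] by linarith
  have "ln (exp y) \<le> ln q" using a q by (subst ln_le_cancel_iff) auto
  then show ?thesis by simp
qed

lemma ev_ge: "filterlim (f :: nat \<Rightarrow> real) at_top sequentially \<Longrightarrow> eventually (\<lambda>n. K \<le> f n) sequentially"
  unfolding filterlim_at_top by blast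

lemma tau_eq_ev: assumes c: "0 < c" "c \<le> ct" and g: "eventually (\<lambda>n. gd n c) sequentially"
  and f: "filterlim (\<lambda>n. tau n c * lam n c) at_top sequentially"
  shows "eventually (\<lambda>n. tau n c = tau n ct) sequentially"
  using g ev_ge[OF f, of "ln (1 + ct) / 2 + 1"] jex_ev[of ct] c
proof -
  have ct0: "0 < ct" using c by simp
  show ?thesis using g ev_ge[OF f, of "ln (1 + ct) / 2 + 1"] jex_ev[OF ct0]
proof eventually_elim
  case (elim n)
  have L: "0 < lam n c" using LAM_pos[OF elim(1)] .
  have "ln (1 + ct) / (2 * lam n c) < tau n c"
  proof -
    have "ln (1 + ct) / 2 < tau n c * lam n c" using elim(2) by simp
    then have "ln (1 + ct) < 2 * lam n c * tau n c" by (simp add: algebra_simps)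
    then show ?thesis using L by (simp add: divide_less_eq algebra_simps)
  qed
  then show ?case using TAU_eq[OF adm[of n] _ c elim(1)] elim by blast
qed
qed

lemma CUT: assumes ct: "0 < ct"
  and H: "\<And>c. 0 < c \<Longrightarrow> c \<le> ct \<Longrightarrow> eventually (\<lambda>n. gd n c) sequentially \<and> filterlim (\<lambda>n. tau n c * lam n c) at_top sequentially"
  shows "cutoff_limits (\<lambda>n m. sqrt (D n m)) (\<lambda>n. tau n ct)"
  unfolding cutoff_limits_def
proof (intro allI impI conjI)
  fix a :: real assume a: "0 < a \<and> a < 1"
  show "(\<lambda>n. sqrt (D n (nat \<lceil>(1 + a) * tau n ct\<rceil>))) \<longlonglongrightarrow> 0"
    unfolding tendsto_iff
  proof (intro allI impI)
    fix e :: real assume e: "0 < e"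
    define c' where "c' = min ct (e^2/4)"
    have c': "0 < c'" "c' \<le> ct" "c' \<le> e^2/4" using ct e by (auto simp: c'_def)
    define K where "K = max 1 (ln (4 * (1 + 1/a) / e^2) / (2*a))"
    note Hc = H[OF c'(1,2)]
    show "eventually (\<lambda>n. dist (sqrt (D n (nat \<lceil>(1 + a) * tau n ct\<rceil>))) 0 < e) sequentially"
      using conjunct1[OF Hc] ev_ge[OF conjunct2[OF Hc], of K] tau_eq_ev[OF c'(1,2) conjunct1[OF Hc] conjunct2[OF Hc]]
    proof eventually_elim
      case (elim n)
      define t where "t = tau n ct"
      define l where "l = lam n c'"
      define M where "M = nat \<lceil>(1 + a) * t\<rceil>"
      have l: "0 < l" using LAM_pos[OF elim(1)] by (simp add: l_def)
      have tl: "K \<le> t * l" using elim(2,3) by (simp add: t_def l_def)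
      have K1: "1 \<le> K" by (simp add: K_def)
      have t: "0 < t" using tl K1 l by (smt (verit) mult_nonpos_nonneg)
      have M: "(1 + a) * t \<le> real M" unfolding M_def by linarith
      have Mt: "a * t \<le> real M - t" using M by (simp add: algebra_simps)
      have at: "0 < a * t" using a t by simp
      have UBn: "D n M \<le> c' + c' * b n (JN n c') ^ (2*M) + M / (M - t) * exp (- 2 * l * (M - t))"
      proof -
        have tM: "tau n c' < real M" using M at elim(3) by (simp add: t_def algebra_simps)
        show ?thesis using UB[OF adm elim(1) c'(1) order_refl tM] elim(3) by (simp add: t_def l_def)
      qed
      have b1: "c' * b n (JN n c') ^ (2*M) \<le> c'"
      proof -
        have "b n (JN n c') ^ (2*M) \<le> 1" using elim(1) unfolding good_def by (intro power_le_one) auto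
        then show ?thesis using c' mult_left_le[of "b n (JN n c') ^ (2*M)" c'] by simp
      qed
      have r1: "M / (M - t) \<le> 1 + 1/a"
      proof -
        have pos: "0 < real M - t" using Mt at by linarith
        have "real M \<le> (1 + 1/a) * (M - t)"
        proof -
          have "t \<le> (M - t) / a" using Mt a by (simp add: le_divide_eq mult.commute)
          moreover have "(1 + 1/a) * (M - t) = (M - t) + (M - t) / a" by (simp add: ring_distribs diff_divide_distrib)
          ultimately show ?thesis by linarith
        qed
        then show ?thesis using pos by (simp add: divide_le_eq)
      qed
      have r2: "exp (- 2 * l * (M - t)) \<le> e^2 / (4 * (1 + 1/a))"
      proof -
        have "- 2 * l * (M - t) \<le> - 2 * a * K"
        proof -
          have "a * K \<le> a * (t * l)" using tl a by simp
          also have "\<dots> = l * (a * t)" by simp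
          also have "\<dots> \<le> l * (M - t)" using Mt l by (intro mult_left_mono) auto
          finally show ?thesis by simp
        qed
        then have "exp (- 2 * l * (M - t)) \<le> exp (- 2 * a * K)" by simp
        also have "\<dots> \<le> e^2 / (4 * (1 + 1/a))"
        proof -
          have q: "0 < 4 * (1 + 1/a) / e^2" using a e by (intro divide_pos_pos mult_pos_pos add_pos_pos) auto
          have "ln (4 * (1 + 1/a) / e^2) \<le> 2 * a * K"
            using a le_max_div[of "2*a"] unfolding K_def by simp
          then have "4 * (1 + 1/a) / e^2 \<le> exp (2 * a * K)" using q by (simp add: ln_le_exp)
          then have "inverse (exp (2 * a * K)) \<le> inverse (4 * (1 + 1/a) / e^2)"
            using q by (rule le_imp_inverse_le)
          then have "exp (- 2 * a * K) \<le> 1 / (4 * (1 + 1/a) / e^2)"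
            by (simp add: exp_minus inverse_eq_divide)
          then show ?thesis by simp
        qed
        finally show ?thesis .
      qed
      have "M / (M - t) * exp (- 2 * l * (M - t)) \<le> (1 + 1/a) * (e^2 / (4 * (1 + 1/a)))"
        using r1 r2 a by (intro mult_mono) auto
      also have "\<dots> = e^2/4"
      proof -
        have "\<And>x y::real. x \<noteq> 0 \<Longrightarrow> x * (y / (4 * x)) = y / 4" by (simp add: field_simps)
        moreover have "1 + 1/a \<noteq> 0" using a by (smt (verit) divide_pos_pos)
        ultimately show ?thesis by blast
      qed
      finally have "D n M \<le> 3 * (e^2/4)" using UBn b1 c' by linarith
      moreover have "0 < e^2" using e by simp
      ultimately have "D n M < e^2" by linarith
      then have "sqrt (D n M) < e" using e real_sqrt_less_mono[of "D n M" "e^2"] by simp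
      then show ?case using DD_nonneg[OF adm] by (simp add: M_def t_def)
    qed
  qed
next
  fix a :: real assume a: "0 < a \<and> a < 1"
  show "filterlim (\<lambda>n. sqrt (D n (nat \<lfloor>(1 - a) * tau n ct\<rfloor>))) at_top sequentially"
    unfolding filterlim_at_top
  proof
    fix Z :: real
    define K where "K = max 0 (ln ((Z^2 + 1) * (1 + ct) / ct) / (2*a))"
    note Hc = H[OF ct order_refl]
    show "eventually (\<lambda>n. Z \<le> sqrt (D n (nat \<lfloor>(1 - a) * tau n ct\<rfloor>))) sequentially"
      using conjunct1[OF Hc] ev_ge[OF conjunct2[OF Hc], of K]
    proof eventually_elim
      case (elim n)
      define t where "t = tau n ct"
      define l where "l = lam n ct"
      define m where "m = nat \<lfloor>(1 - a) * t\<rfloor>"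
      have jx: "jx n ct" using elim(1) by (simp add: good_def)
      have l: "0 < l" using LAM_pos[OF elim(1)] by (simp add: l_def)
      have tl: "K \<le> t * l" using elim(2) by (simp add: t_def l_def)
      have t0: "0 \<le> t" using TAU_nonneg[OF adm jx] ct by (simp add: t_def)
      have m: "real m \<le> (1 - a) * t" unfolding m_def using t0 a by (simp add: of_nat_nat)
      then have mt: "real m \<le> t" using a t0 by (smt (verit) mult_left_le_one_le)
      have LBn: "ct / (1 + ct) * exp (2 * l * (t - m)) \<le> D n m"
        using LB[OF adm elim(1) ct, of m] mt by (simp add: t_def l_def)
      have "2 * a * K \<le> 2 * l * (t - m)"
      proof -
        have "a * K \<le> a * (t * l)" using tl a by simp
        also have "\<dots> = l * (a * t)" by simp
        also have "\<dots> \<le> l * (t - m)" using m l by (intro mult_left_mono) (auto simp: algebra_simps)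
        finally show ?thesis by simp
      qed
      then have "exp (2 * a * K) \<le> exp (2 * l * (t - m))" by simp
      moreover have "(Z^2 + 1) * (1 + ct) / ct \<le> exp (2 * a * K)"
      proof -
        have q: "0 < (Z^2 + 1) * (1 + ct) / ct" using ct
          by (intro divide_pos_pos mult_pos_pos add_nonneg_pos) auto
        have "ln ((Z^2 + 1) * (1 + ct) / ct) \<le> 2 * a * K"
          using a le_max_div[of "2*a"] unfolding K_def by simp
        then show ?thesis using q by (simp add: ln_le_exp)
      qed
      ultimately have "(Z^2 + 1) * (1 + ct) / ct \<le> exp (2 * l * (t - m))" by linarith
      then have "ct / (1 + ct) * ((Z^2 + 1) * (1 + ct) / ct) \<le> ct / (1 + ct) * exp (2 * l * (t - m))"
        using ct by (intro mult_left_mono) auto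
      moreover have "ct / (1 + ct) * ((Z^2 + 1) * (1 + ct) / ct) = Z^2 + 1"
      proof -
        have d: "ct + ct*ct \<noteq> 0" "1 + ct \<noteq> 0" "ct \<noteq> 0" using ct by (smt (verit) mult_pos_pos)+
        have gen: "\<And>X. ct/(1+ct) * (X*(1+ct)/ct) = X" using d by (simp add: field_simps)
        show ?thesis by (rule gen)
      qed
      ultimately have "Z^2 + 1 \<le> D n m" using LBn by simp
      then have "sqrt (Z^2 + 1) \<le> sqrt (D n m)" by simp
      moreover have "Z \<le> sqrt (Z^2 + 1)" by (smt (verit) real_sqrt_abs real_sqrt_le_mono)
      ultimately have "Z \<le> sqrt (D n m)" by linarith
      then show ?case by (simp add: m_def t_def)
    qed
  qed
qed

lemma nat_ceil: "0 \<le> (x::real) \<Longrightarrow> real (nat \<lceil>x\<rceil>) < x + 1 \<and> x \<le> real (nat \<lceil>x\<rceil>)"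
proof -
  assume x: "0 \<le> x"
  then have "0 \<le> \<lceil>x\<rceil>" by simp
  then have "real (nat \<lceil>x\<rceil>) = real_of_int \<lceil>x\<rceil>" by simp
  then show ?thesis using ceiling_correct[of x] by linarith
qed

lemma nat_floor: "0 \<le> (x::real) \<Longrightarrow> real (nat \<lfloor>x\<rfloor>) \<le> x \<and> x < real (nat \<lfloor>x\<rfloor>) + 1"
proof -
  assume x: "0 \<le> x"
  then have "0 \<le> \<lfloor>x\<rfloor>" by simp
  then have "real (nat \<lfloor>x\<rfloor>) = real_of_int \<lfloor>x\<rfloor>" by simp
  then show ?thesis using floor_correct[of x] by linarith
qed

abbreviation "Tr n eps \<equiv> (LEAST m. sqrt (D n m) \<le> eps)"

lemma sqrt_le_sq: "0 \<le> e \<Longrightarrow> 0 \<le> x \<Longrightarrow> sqrt x \<le> e \<longleftrightarrow> x \<le> e^2"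
  by (metis abs_of_nonneg real_sqrt_abs real_sqrt_le_iff)

lemma dle: "0 \<le> e \<Longrightarrow> sqrt (D n m) \<le> e \<longleftrightarrow> D n m \<le> e^2"
  using sqrt_le_sq DD_nonneg[OF adm] by blast

lemma Tr_le: "D n m \<le> e^2 \<Longrightarrow> 0 \<le> e \<Longrightarrow> Tr n e \<le> m"
  by (rule Least_le) (simp add: dle)

lemma Tr_prop: "D n m \<le> e^2 \<Longrightarrow> 0 \<le> e \<Longrightarrow> D n (Tr n e) \<le> e^2"
  using LeastI[of "\<lambda>m. sqrt (D n m) \<le> e" m] by (simp add: dle)

lemma Tr_gt: "m < Tr n e \<Longrightarrow> 0 \<le> e \<Longrightarrow> e^2 < D n m"
  using not_less_Least[of m "\<lambda>m. sqrt (D n m) \<le> e"] by (simp add: dle)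

lemma Tr_mono: "D n m \<le> d^2 \<Longrightarrow> 0 \<le> d \<Longrightarrow> d \<le> e \<Longrightarrow> Tr n e \<le> Tr n d"
proof -
  assume a: "D n m \<le> d^2" "0 \<le> d" "d \<le> e"
  have "D n (Tr n d) \<le> d^2" using Tr_prop[OF a(1,2)] .
  also have "d^2 \<le> e^2" using a by (simp add: power_mono)
  finally show ?thesis using a by (intro Tr_le) auto
qed

lemma pow_exp_lam: "0 < x \<Longrightarrow> (x::real) ^ (2*m) = exp (- 2 * (- ln x) * m)"
  using pow_exp[of x "2*m"] by (simp add: algebra_simps)

lemma C1C2: assumes cut: "cutoff_limits (\<lambda>n m. sqrt (D n m)) t" and tpos: "\<And>n. 0 < t n"
  and c: "0 < c" and e: "0 < e"
  shows "eventually (\<lambda>n. gd n c \<and> (\<exists>m. sqrt (D n m) \<le> e)) sequentially"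
    "filterlim (\<lambda>n. real (Tr n e) * lam n c) at_top sequentially"
proof -
  have h: "0 < (1/2::real)" "(1/2::real) < 1" by auto
  have up: "(\<lambda>n. sqrt (D n (nat \<lceil>(1 + 1/2) * t n\<rceil>))) \<longlonglongrightarrow> 0"
    and lo: "filterlim (\<lambda>n. sqrt (D n (nat \<lfloor>(1 - 1/2) * t n\<rfloor>))) at_top sequentially"
    using cut h unfolding cutoff_limits_def by blast+
  have evup: "eventually (\<lambda>n. D n (nat \<lceil>(1 + 1/2) * t n\<rceil>) < d) sequentially" if d: "0 < d" for d
  proof -
    have "eventually (\<lambda>n. dist (sqrt (D n (nat \<lceil>(1 + 1/2) * t n\<rceil>))) 0 < sqrt d) sequentially"
      using up d unfolding tendsto_iff by simp
    then show ?thesis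
    proof eventually_elim
      case (elim n) then show ?case using DD_nonneg[OF adm] by (simp add: real_sqrt_less_iff)
    qed
  qed
  have evlo: "eventually (\<lambda>n. e < sqrt (D n (nat \<lfloor>(1 - 1/2) * t n\<rfloor>))) sequentially"
    using lo unfolding filterlim_at_top_dense by blast
  have main: "eventually (\<lambda>n. gd n c \<and> (\<exists>m. sqrt (D n m) \<le> e) \<and> K \<le> real (Tr n e) * lam n c) sequentially" for K
  proof -
    define Kp where "Kp = max K 0"
    define d where "d = min (e^2) (c * exp (- 8 * Kp))"
    have d: "0 < d" using e c by (simp add: d_def)
    show ?thesis using evup[OF d] evlo jex_ev[OF c]
    proof eventually_elim
      case (elim n)
      define M where "M = nat \<lceil>(1 + 1/2) * t n\<rceil>"
      define ml where "ml = nat \<lfloor>(1 - 1/2) * t n\<rfloor>"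
      define bJ where "bJ = b n (JN n c)"
      have DM: "D n M < d" using elim by (simp add: M_def)
      have "c * bJ ^ (2*M) \<le> D n M" unfolding bJ_def using LB0[OF adm, of n c M] elim c by simp
      then have bM: "bJ ^ (2*M) < exp (- 8 * Kp)" using DM d_def c
        by (smt (verit) mult_less_cancel_left_pos min.cobounded2)
      have bJ0: "0 < bJ" using elim by (simp add: bJ_def)
      have bJ1: "bJ < 1"
      proof (rule ccontr)
        assume "\<not> bJ < 1" then have "1 \<le> bJ ^ (2*M)" by (simp add: one_le_power)
        moreover have "exp (- 8 * Kp) \<le> 1" by (simp add: Kp_def)
        ultimately show False using bM by simp
      qed
      have g: "gd n c" using elim bJ0 bJ1 by (simp add: good_def bJ_def)
      define l where "l = lam n c"
      have l: "0 < l" using LAM_pos[OF g] by (simp add: l_def)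
      have "exp (- 2 * l * M) < exp (- 8 * Kp)" using bM pow_exp_lam[OF bJ0, of M] by (simp add: l_def LAM_def bJ_def)
      then have lM: "4 * Kp < l * M" by simp
      have fin: "D n M \<le> e^2" using DM d_def by simp
      have TM: "Tr n e \<le> M" using Tr_le[OF fin] e by simp
      have Tml: "ml < Tr n e"
      proof (rule ccontr)
        assume "\<not> ml < Tr n e"
        then have "D n ml \<le> D n (Tr n e)" using DD_mono[OF adm] by simp
        also have "\<dots> \<le> e^2" using Tr_prop[OF fin] e by simp
        finally have "sqrt (D n ml) \<le> e" using dle e by simp
        then show False using elim by (simp add: ml_def)
      qed
      have t: "0 < t n" by (rule tpos)
      have "real M \<le> 4 * real (Tr n e)"
      proof -
        have "real M < (1 + 1/2) * t n + 1" unfolding M_def using t nat_ceil[of "(1 + 1/2) * t n"] by simp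
        then have "real M < 3/2 * t n + 1" by simp
        moreover have "(1 - 1/2) * t n < real ml + 1" unfolding ml_def using t nat_floor[of "(1 - 1/2) * t n"] by simp
        then have "1/2 * t n < real ml + 1" by simp
        moreover have "real ml + 1 \<le> real (Tr n e)" using Tml by simp
        moreover have "0 \<le> real ml" by simp
        ultimately show ?thesis by linarith
      qed
      then have "l * M \<le> l * (4 * real (Tr n e))" using l by (intro mult_left_mono) auto
      moreover have "l * (4 * real (Tr n e)) = 4 * (real (Tr n e) * l)" by simp
      moreover have "K \<le> Kp" by (simp add: Kp_def)
      ultimately have "K \<le> real (Tr n e) * l" using lM by linarith
      moreover have "\<exists>m. sqrt (D n m) \<le> e" using fin dle[of e n M] e by auto
      ultimately show ?case using g by (simp add: l_def)
    qed
  qed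
  show "eventually (\<lambda>n. gd n c \<and> (\<exists>m. sqrt (D n m) \<le> e)) sequentially"
    using main[of 0] by (rule eventually_mono) auto
  show "filterlim (\<lambda>n. real (Tr n e) * lam n c) at_top sequentially"
    unfolding filterlim_at_top
  proof
    fix Z show "eventually (\<lambda>n. Z \<le> real (Tr n e) * lam n c) sequentially"
      using main[of Z] by (rule eventually_mono) auto
  qed
qed

abbreviation "Te n e \<equiv> (if \<exists>m. sqrt (D n m) \<le> e then ereal (real (Tr n e)) else \<infinity>)"

lemma gd_up: assumes "gd n c" "jx n ct" "0 < b n (JN n ct)" "0 < c" "c \<le> ct"
  shows "gd n ct" "lam n c \<le> lam n ct"
proof -
  have jc: "jx n c" using assms(1) by (simp add: good_def)
  have "JN n c \<le> JN n ct" using JJ_mono[OF assms(2) assms(4,5) adm] by simp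
  moreover have "1 \<le> JN n c" using JJ[OF jc] assms by simp
  moreover have "JN n ct < N n" using JJ[OF assms(2)] assms by simp
  ultimately have le: "b n (JN n ct) \<le> b n (JN n c)" using adm_mono[OF adm] by blast
  then show "gd n ct" using assms by (simp add: good_def)
  show "lam n c \<le> lam n ct" unfolding LAM_def using le assms by simp
qed

lemma TT: assumes c: "0 < c" "c \<le> ct" and e: "0 < e" "4 * ct \<le> e^2"
  and g: "eventually (\<lambda>n. gd n c) sequentially"
  and H: "\<And>B. eventually (\<lambda>n. ereal B < Te n e * ereal (lam n c)) sequentially"
  shows "filterlim (\<lambda>n. tau n ct * lam n c) at_top sequentially"
  unfolding filterlim_at_top
proof
  fix B :: real
  define Bp where "Bp = max B 0"
  define K where "K = max 1 (ln (4 / e^2) / 2)"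
  have ct: "0 < ct" using c by simp
  have ggct: "eventually (\<lambda>n. gd n ct \<and> lam n c \<le> lam n ct) sequentially"
    using g jex_ev[OF ct] by eventually_elim (use gd_up c in blast)
  have half: "eventually (\<lambda>n. 1/2 < tau n ct) sequentially"
    using tau_half[OF ct] ggct by (simp add: eventually_conj_iff)
  show "eventually (\<lambda>n. B \<le> tau n ct * lam n c) sequentially"
    using g ggct half H[of "4 * Bp + K"]
  proof eventually_elim
    case (elim n)
    define t where "t = tau n ct"
    define l0 where "l0 = lam n ct"
    define l where "l = lam n c"
    have l: "0 < l" using LAM_pos[OF elim(1)] by (simp add: l_def)
    have l0: "0 < l0" using LAM_pos[OF conjunct1[OF elim(2)]] by (simp add: l0_def)
    have ll0: "l \<le> l0" using elim(2) by (simp add: l_def l0_def)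
    have t: "1/2 < t" using elim(3) by (simp add: t_def)
    define m0 where "m0 = nat \<lceil>2 * t + K / l0\<rceil>"
    have K1: "1 \<le> K" by (simp add: K_def)
    have Kl: "0 < K / l0" using K1 l0 by simp
    have m0: "2 * t + K / l0 \<le> real m0" "real m0 < 2 * t + K / l0 + 1"
      using nat_ceil[of "2 * t + K / l0"] t Kl unfolding m0_def by auto
    have tm: "tau n ct < real m0" using m0 t Kl by (simp add: t_def)
    have UBn: "D n m0 \<le> ct + ct * b n (JN n ct) ^ (2*m0) + m0 / (m0 - t) * exp (- 2 * l0 * (m0 - t))"
      using UB[OF adm conjunct1[OF elim(2)] ct order_refl tm] by (simp add: t_def l0_def)
    have b1: "ct * b n (JN n ct) ^ (2*m0) \<le> ct"
    proof -
      have "b n (JN n ct) ^ (2*m0) \<le> 1" using elim(2) unfolding good_def by (intro power_le_one) auto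
      then show ?thesis using ct mult_left_le[of "b n (JN n ct) ^ (2*m0)" ct] by simp
    qed
    have r1: "m0 / (m0 - t) \<le> 2"
    proof -
      have "0 < real m0 - t" using m0 t Kl by linarith
      moreover have "real m0 \<le> 2 * (m0 - t)"
      proof -
        have "2 * (real m0 - t) = 2 * real m0 - 2 * t" by simp
        then show ?thesis using m0 Kl by linarith
      qed
      ultimately show ?thesis by (simp add: divide_le_eq)
    qed
    have r2: "exp (- 2 * l0 * (m0 - t)) \<le> e^2 / 4"
    proof -
      have "K \<le> l0 * (m0 - t)"
      proof -
        have "K = l0 * (K / l0)" using l0 by simp
        also have "\<dots> \<le> l0 * (m0 - t)" using m0 t l0 by (intro mult_left_mono) auto
        finally show ?thesis .
      qed
      then have "exp (- 2 * l0 * (m0 - t)) \<le> exp (- 2 * K)" by simp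
      also have "\<dots> \<le> e^2 / 4"
      proof -
        have q: "0 < 4 / e^2" using e by simp
        have "ln (4 / e^2) \<le> 2 * K" unfolding K_def by simp
        then have "4 / e^2 \<le> exp (2 * K)" using q by (simp add: ln_le_exp)
        then have "inverse (exp (2 * K)) \<le> inverse (4 / e^2)" using q by (rule le_imp_inverse_le)
        then show ?thesis by (simp add: exp_minus inverse_eq_divide)
      qed
      finally show ?thesis .
    qed
    have "m0 / (m0 - t) * exp (- 2 * l0 * (m0 - t)) \<le> 2 * (e^2 / 4)"
      using r1 r2 by (intro mult_mono) auto
    then have Dm0: "D n m0 \<le> e^2" using UBn b1 e by linarith
    have ex: "\<exists>m. sqrt (D n m) \<le> e" using Dm0 dle[of e n m0] e by auto
    have Trm: "real (Tr n e) \<le> real m0" using Tr_le[OF Dm0] e by simp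
    have prod: "4 * Bp + K < real (Tr n e) * l" using elim(4) ex by (simp add: l_def)
    show ?case
    proof (rule ccontr)
      assume "\<not> B \<le> tau n ct * lam n c"
      then have tl: "t * l < Bp" by (simp add: t_def l_def Bp_def)
      have lB: "l < 2 * Bp"
      proof -
        have "1/2 * l \<le> t * l" using t l by (intro mult_right_mono) auto
        then show ?thesis using tl by simp
      qed
      have "real (Tr n e) * l \<le> (2 * t + K / l0 + 1) * l" using Trm m0 l by (intro mult_right_mono) auto
      also have "\<dots> = 2 * (t * l) + K * (l / l0) + l" using l0 by (simp add: algebra_simps)
      also have "K * (l / l0) \<le> K" using ll0 l0 K1 by (simp add: mult_left_le divide_le_eq)
      finally have "real (Tr n e) * l \<le> 2 * (t * l) + K + l" by simp
      then show False using prod tl lB by linarith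
    qed
  qed
qed

lemma exp_le_from_ln: "0 < (q::real) \<Longrightarrow> ln q \<le> 2 * K \<Longrightarrow> exp (- 2 * K) \<le> 1 / q"
proof -
  assume q: "0 < q" and l: "ln q \<le> 2 * K"
  have "q \<le> exp (2 * K)" using ln_le_exp[OF q l] .
  then have "inverse (exp (2 * K)) \<le> inverse q" using q by (rule le_imp_inverse_le)
  then show ?thesis by (simp add: exp_minus inverse_eq_divide)
qed

lemma P2: assumes c: "0 < c" and ed: "0 < d" "d < e"
  and G: "\<And>c1. 0 < c1 \<Longrightarrow> eventually (\<lambda>n. gd n c1) sequentially"
  and F: "\<And>c1. 0 < c1 \<Longrightarrow> eventually (\<lambda>n. \<exists>m. sqrt (D n m) \<le> e) sequentially \<and> filterlim (\<lambda>n. real (Tr n e) * lam n c1) at_top sequentially"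
  shows "\<exists>C. eventually (\<lambda>n. (\<exists>m. sqrt (D n m) \<le> d) \<and> (\<exists>m. sqrt (D n m) \<le> e) \<and> real (Tr n e) \<le> real (Tr n d) \<and>
      real (Tr n d) \<le> real (Tr n e) + C * max 1 (1 / lam n c)) sequentially"
proof -
  define c1 where "c1 = min c (d^2/3)"
  have c1: "0 < c1" "c1 \<le> c" "c1 \<le> d^2/3" using c ed by (auto simp: c1_def)
  define L where "L = ln (3 * e^2 / d^2) / 2"
  define K1 where "K1 = max 0 (ln (3 * c / d^2) / 2)"
  have L0: "0 < L"
  proof -
    have "d^2 < e^2" using ed by (simp add: power_strict_mono)
    moreover have "0 \<le> e^2" by simp
    ultimately have "d^2 < 3 * e^2" by linarith
    then have "1 < 3 * e^2 / d^2" using ed by (simp add: field_simps)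
    then show ?thesis unfolding L_def by simp
  qed
  have e0: "0 < e" using ed by simp
  show ?thesis
  proof (intro exI)
    show "eventually (\<lambda>n. (\<exists>m. sqrt (D n m) \<le> d) \<and> (\<exists>m. sqrt (D n m) \<le> e) \<and> real (Tr n e) \<le> real (Tr n d) \<and>
      real (Tr n d) \<le> real (Tr n e) + (L + 1) * max 1 (1 / lam n c)) sequentially"
      using G[OF c] G[OF c1(1)] conjunct1[OF F[OF c1(1)]] ev_ge[OF conjunct2[OF F[OF c1(1)]], of K1]
    proof eventually_elim
      case (elim n)
      define m where "m = Tr n e"
      define l0 where "l0 = lam n c"
      define l1 where "l1 = lam n c1"
      have l0: "0 < l0" using LAM_pos[OF elim(1)] by (simp add: l0_def)
      have l1: "0 < l1" using LAM_pos[OF elim(2)] by (simp add: l1_def)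
      obtain m' where "sqrt (D n m') \<le> e" using elim(3) by blast
      then have "D n m' \<le> e^2" using dle e0 by simp
      then have Dm: "D n m \<le> e^2" using Tr_prop e0 by (simp add: m_def)
      define k where "k = nat \<lceil>L / l0\<rceil>"
      have k: "L / l0 \<le> real k" "real k < L / l0 + 1" using nat_ceil[of "L / l0"] L0 l0 by (auto simp: k_def)
      have jc: "jx n c" using elim(1) by (simp add: good_def)
      have S: "D n (m + k) \<le> c1 + c * b n (JN n c1) ^ (2*m) + b n (JN n c) ^ (2*k) * D n m"
        by (rule UBshift[OF adm jc c1(1,2)])
      have mid: "c * b n (JN n c1) ^ (2*m) \<le> d^2/3"
      proof -
        have b0: "0 < b n (JN n c1)" using elim(2) by (simp add: good_def)
        have "b n (JN n c1) ^ (2*m) = exp (- 2 * l1 * m)" using pow_exp_lam[OF b0] by (simp add: l1_def LAM_def)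
        also have "\<dots> \<le> exp (- 2 * K1)" using elim(4) by (simp add: m_def l1_def mult.commute)
        also have "\<dots> \<le> 1 / (3 * c / d^2)"
          by (rule exp_le_from_ln) (use c ed in \<open>auto simp: K1_def\<close>)
        finally have bb: "b n (JN n c1) ^ (2*m) \<le> 1 / (3 * c / d^2)" .
        have "c * b n (JN n c1) ^ (2*m) \<le> c * (1 / (3 * c / d^2))" by (rule mult_left_mono[OF bb]) (use c in simp)
        also have "\<dots> = d^2/3" using c by (simp add: field_simps)
        finally show ?thesis .
      qed
      have tail: "b n (JN n c) ^ (2*k) * D n m \<le> d^2/3"
      proof -
        have b0: "0 < b n (JN n c)" using elim(1) by (simp add: good_def)
        have "b n (JN n c) ^ (2*k) = exp (- 2 * l0 * k)" using pow_exp_lam[OF b0] by (simp add: l0_def LAM_def)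
        also have "\<dots> \<le> exp (- 2 * L)"
        proof -
          have "L = l0 * (L / l0)" using l0 by simp
          also have "\<dots> \<le> l0 * k" using k l0 by (intro mult_left_mono) auto
          finally show ?thesis by simp
        qed
        also have "\<dots> \<le> 1 / (3 * e^2 / d^2)"
          by (rule exp_le_from_ln) (use ed in \<open>auto simp: L_def\<close>)
        finally have bb: "b n (JN n c) ^ (2*k) \<le> 1 / (3 * e^2 / d^2)" .
        have "b n (JN n c) ^ (2*k) * D n m \<le> 1 / (3 * e^2 / d^2) * e^2"
          by (rule mult_mono[OF bb Dm]) (use ed DD_nonneg[OF adm, of n m] in auto)
        also have "\<dots> = d^2/3" using ed by (simp add: field_simps)
        finally show ?thesis .
      qed
      have Dmk: "D n (m + k) \<le> d^2" using S mid tail c1 by linarith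
      have d0: "0 \<le> d" using ed by simp
      have Trd: "Tr n d \<le> m + k" using Tr_le[OF Dmk d0] .
      have exd: "\<exists>m. sqrt (D n m) \<le> d" using Dmk dle[of d n "m+k"] d0 by auto
      have Tde: "Tr n e \<le> Tr n d" by (rule Tr_mono[OF Dmk d0]) (use ed in simp)
      have "real k \<le> (L + 1) * max 1 (1 / l0)"
      proof -
        have "L / l0 = L * (1/l0)" by simp
        also have "\<dots> \<le> L * max 1 (1/l0)" using L0 by (intro mult_left_mono) auto
        finally have "L / l0 \<le> L * max 1 (1/l0)" .
        moreover have "1 \<le> max 1 (1 / l0)" by simp
        ultimately show ?thesis using k by (simp add: algebra_simps)
      qed
      then show ?case using Trd Tde exd elim(3) by (simp add: m_def l0_def)
    qed
  qed
qed

lemma P3: assumes c: "0 < c" and e: "0 < e"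
  and H: "\<And>c1. 0 < c1 \<Longrightarrow> eventually (\<lambda>n. gd n c1) sequentially \<and> filterlim (\<lambda>n. tau n c1 * lam n c1) at_top sequentially"
  shows "\<exists>C. eventually (\<lambda>n. (\<exists>m. sqrt (D n m) \<le> e) \<and> \<bar>real (Tr n e) - tau n c\<bar> \<le> C * max 1 (sqrt (tau n c / lam n c))) sequentially"
proof -
  define c1 where "c1 = min c (e^2/3)"
  have c1: "0 < c1" "c1 \<le> c" "c1 \<le> e^2/3" using c e by (auto simp: c1_def)
  define A where "A = max 1 (1 + ln (3 / e^2) / 2)"
  define K1 where "K1 = max 0 (ln (3 * c / e^2) / 2)"
  define L where "L = max 0 (ln (e^2 * (1 + c) / c) / 2)"
  have A1: "1 \<le> A" by (simp add: A_def)
  have L0: "0 \<le> L" by (simp add: L_def)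
  note H1 = H[OF c1(1)] and H0 = H[OF c]
  show ?thesis
  proof (intro exI)
    show "eventually (\<lambda>n. (\<exists>m. sqrt (D n m) \<le> e) \<and> \<bar>real (Tr n e) - tau n c\<bar> \<le> max (A + 1) L * max 1 (sqrt (tau n c / lam n c))) sequentially"
      using conjunct1[OF H0] conjunct1[OF H1] tau_eq_ev[OF c1(1,2) conjunct1[OF H1] conjunct2[OF H1]]
        ev_ge[OF conjunct2[OF H1], of K1] ev_ge[OF conjunct2[OF H0], of 1]
    proof eventually_elim
      case (elim n)
      define t where "t = tau n c"
      define l0 where "l0 = lam n c"
      define l1 where "l1 = lam n c1"
      have l0: "0 < l0" using LAM_pos[OF elim(1)] by (simp add: l0_def)
      have l1: "0 < l1" using LAM_pos[OF elim(2)] by (simp add: l1_def)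
      have tl0: "1 \<le> t * l0" using elim(5) by (simp add: t_def l0_def)
      have t0: "0 < t" using tl0 l0 by (smt (verit) mult_nonpos_nonneg)
      have tl1: "K1 \<le> t * l1" using elim(3,4) by (simp add: t_def l1_def)
      define x where "x = sqrt (t * l0)"
      define q where "q = sqrt (t / l0)"
      have x1: "1 \<le> x" using tl0 by (simp add: x_def)
      have q0: "0 < q" using t0 l0 by (simp add: q_def)
      have qx: "q * x = t" unfolding q_def x_def using t0 l0 by (simp add: real_sqrt_mult[symmetric])
      have lq: "l0 * q = x"
      proof -
        have "l0 * q = sqrt (l0^2) * sqrt (t / l0)" using l0 by (simp add: q_def)
        also have "\<dots> = sqrt (l0^2 * (t / l0))" by (rule real_sqrt_mult[symmetric])
        also have "l0^2 * (t / l0) = t * l0" using l0 by (simp add: power2_eq_square)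
        finally show ?thesis by (simp add: x_def)
      qed
      have iq: "1 / l0 \<le> q"
      proof -
        have "(1/l0)^2 \<le> t / l0" using tl0 l0 by (simp add: power2_eq_square field_simps)
        then have "sqrt ((1/l0)^2) \<le> q" unfolding q_def by (rule real_sqrt_le_mono)
        then show ?thesis using l0 by simp
      qed
      define s where "s = A * q"
      have s0: "0 < s" using A1 q0 by (simp add: s_def)
      define m where "m = nat \<lceil>t + s\<rceil>"
      have m: "t + s \<le> real m" "real m < t + s + 1" using nat_ceil[of "t + s"] t0 s0 by (auto simp: m_def)
      have tm: "tau n c < real m" using m s0 by (simp add: t_def)
      have UBn: "D n m \<le> c1 + c * b n (JN n c1) ^ (2*m) + m / (m - t) * exp (- 2 * l0 * (m - t))"
        using UB[OF adm elim(1) c1(1,2) tm] by (simp add: t_def l0_def)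
      have mid: "c * b n (JN n c1) ^ (2*m) \<le> e^2/3"
      proof -
        have b0: "0 < b n (JN n c1)" using elim(2) by (simp add: good_def)
        have "b n (JN n c1) ^ (2*m) = exp (- 2 * l1 * m)" using pow_exp_lam[OF b0] by (simp add: l1_def LAM_def)
        also have "\<dots> \<le> exp (- 2 * K1)"
        proof -
          have "K1 \<le> l1 * t" using tl1 by (simp add: mult.commute)
          also have "\<dots> \<le> l1 * m" using m s0 l1 by (intro mult_left_mono) auto
          finally show ?thesis by simp
        qed
        also have "\<dots> \<le> 1 / (3 * c / e^2)"
          by (rule exp_le_from_ln) (use c e in \<open>auto simp: K1_def\<close>)
        finally have bb: "b n (JN n c1) ^ (2*m) \<le> 1 / (3 * c / e^2)" .
        have "c * b n (JN n c1) ^ (2*m) \<le> c * (1 / (3 * c / e^2))" by (rule mult_left_mono[OF bb]) (use c in simp)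
        also have "\<dots> = e^2/3" using c by (simp add: field_simps)
        finally show ?thesis .
      qed
      have tail: "m / (m - t) * exp (- 2 * l0 * (m - t)) \<le> e^2/3"
      proof -
        have pos: "0 < real m - t" using m s0 by linarith
        have r1: "m / (m - t) \<le> 1 + x"
        proof -
          have "t / (m - t) \<le> t / s" using pos m t0 s0 by (intro divide_left_mono) auto
          also have "t / s = x / A" using qx A1 q0 by (simp add: s_def field_simps)
          also have "x / A \<le> x" using A1 x1 by (simp add: divide_le_eq mult_le_cancel_left1)
          finally have "t / (m - t) \<le> x" .
          moreover have "m / (m - t) = 1 + t / (m - t)" using pos by (simp add: field_simps)
          ultimately show ?thesis by simp
        qed
        have r2: "exp (- 2 * l0 * (m - t)) \<le> exp (- 2 * A * x)"
        proof -
          have "A * x = l0 * s" using lq by (simp add: s_def algebra_simps)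
          also have "\<dots> \<le> l0 * (m - t)" using m l0 by (intro mult_left_mono) auto
          finally show ?thesis by simp
        qed
        have "m / (m - t) * exp (- 2 * l0 * (m - t)) \<le> (1 + x) * exp (- 2 * A * x)"
          using r1 r2 pos x1 by (intro mult_mono) auto
        also have "\<dots> \<le> exp x * exp (- 2 * A * x)" using exp_ge_add_one_self[of x] by (intro mult_right_mono) auto
        also have "\<dots> = exp (- ((2 * A - 1) * x))" by (simp add: exp_add[symmetric] algebra_simps)
        also have "\<dots> \<le> exp (- 2 * (A - 1))"
        proof -
          have "(2 * A - 1) * 1 \<le> (2 * A - 1) * x" using A1 x1 by (intro mult_left_mono) auto
          then show ?thesis by simp
        qed
        also have "\<dots> \<le> 1 / (3 / e^2)"
        proof (rule exp_le_from_ln)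
          show "0 < 3 / e^2" using e by simp
          have "1 + ln (3 / e^2) / 2 \<le> A" by (simp add: A_def)
          moreover have "2 * (A - 1) = 2 * A - 2" by simp
          ultimately show "ln (3 / e^2) \<le> 2 * (A - 1)" by linarith
        qed
        also have "\<dots> = e^2/3" by simp
        finally show ?thesis .
      qed
      have Dm: "D n m \<le> e^2" using UBn mid tail c1 by linarith
      have e0: "0 \<le> e" using e by simp
      have Trm: "real (Tr n e) \<le> real m" using Tr_le[OF Dm e0] by simp
      have ex: "\<exists>m. sqrt (D n m) \<le> e" using Dm dle[of e n m] e0 by auto
      have mx: "1 \<le> max 1 q" "q \<le> max 1 q" by auto
      have up: "real (Tr n e) - t \<le> (A + 1) * max 1 q"
      proof -
        have "real (Tr n e) - t \<le> A * q + 1" using Trm m by (simp add: s_def)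
        also have "\<dots> \<le> A * max 1 q + 1 * max 1 q" using A1 mx by (intro add_mono mult_left_mono) auto
        finally show ?thesis by (simp add: algebra_simps)
      qed
      have lo: "t - real (Tr n e) \<le> L * max 1 q"
      proof (cases "real (Tr n e) < t")
        case False
        then have "t - real (Tr n e) \<le> 0" by simp
        also have "0 \<le> L * max 1 q" using L0 by simp
        finally show ?thesis .
      next
        case True
        have DT: "D n (Tr n e) \<le> e^2" using Tr_prop[OF Dm e0] .
        have "c / (1 + c) * exp (2 * l0 * (t - Tr n e)) \<le> D n (Tr n e)"
          using LB[OF adm elim(1) c, of "Tr n e"] True by (simp add: t_def l0_def)
        then have "c / (1 + c) * exp (2 * l0 * (t - Tr n e)) \<le> e^2" using DT by simp
        then have "exp (2 * l0 * (t - Tr n e)) \<le> e^2 * (1 + c) / c" using c by (simp add: field_simps)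
        then have "2 * l0 * (t - Tr n e) \<le> ln (e^2 * (1 + c) / c)"
          by (rule le_ln)
        also have "\<dots> \<le> 2 * L" by (simp add: L_def)
        finally have "l0 * (t - Tr n e) \<le> L" by simp
        then have "t - Tr n e \<le> L * (1 / l0)" using l0 by (simp add: field_simps mult.commute)
        also have "\<dots> \<le> L * max 1 q" using iq mx L0 by (intro mult_left_mono) auto
        finally show ?thesis .
      qed
      have "\<bar>real (Tr n e) - t\<bar> \<le> max (A + 1) L * max 1 q"
      proof -
        have "(A + 1) * max 1 q \<le> max (A + 1) L * max 1 q" by (intro mult_right_mono) auto
        moreover have "L * max 1 q \<le> max (A + 1) L * max 1 q" by (intro mult_right_mono) auto
        ultimately show ?thesis using up lo by linarith
      qed
      then show ?case using ex by (simp add: t_def q_def l0_def)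
    qed
  qed
qed

end


lemma ereal_lim_iff: assumes ev: "eventually (\<lambda>n. f n = ereal (g n)) F"
  shows "(f \<longlongrightarrow> \<infinity>) F \<longleftrightarrow> filterlim g at_top F"
proof
  assume "(f \<longlongrightarrow> \<infinity>) F"
  then have h: "\<And>r. eventually (\<lambda>n. ereal r < f n) F" by (simp add: tendsto_PInfty)
  show "filterlim g at_top F" unfolding filterlim_at_top_dense
  proof (intro allI)
    fix Z show "eventually (\<lambda>n. Z < g n) F" using h[of Z] ev by eventually_elim simp
  qed
next
  assume "filterlim g at_top F"
  then have h: "\<And>Z. eventually (\<lambda>n. Z < g n) F" unfolding filterlim_at_top_dense by blast
  show "(f \<longlongrightarrow> \<infinity>) F" unfolding tendsto_PInfty
  proof (intro allI)
    fix r show "eventually (\<lambda>n. ereal r < f n) F" using h[of r] ev by eventually_elim simp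
  qed
qed

lemma cutoff_limits_cong: assumes ev: "eventually (\<lambda>n. t n = t' n) sequentially"
  and c: "cutoff_limits d t" shows "cutoff_limits d t'"
  unfolding cutoff_limits_def
proof (intro allI impI conjI)
  fix a :: real assume a: "0 < a \<and> a < 1"
  have 1: "(\<lambda>n. d n (nat \<lceil>(1 + a) * t n\<rceil>)) \<longlonglongrightarrow> 0" and 2: "filterlim (\<lambda>n. d n (nat \<lfloor>(1 - a) * t n\<rfloor>)) at_top sequentially"
    using c a unfolding cutoff_limits_def by blast+
  have e1: "eventually (\<lambda>n. d n (nat \<lceil>(1 + a) * t n\<rceil>) = d n (nat \<lceil>(1 + a) * t' n\<rceil>)) sequentially"
    using ev by eventually_elim simp
  have e2: "eventually (\<lambda>n. d n (nat \<lfloor>(1 - a) * t n\<rfloor>) = d n (nat \<lfloor>(1 - a) * t' n\<rfloor>)) sequentially"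
    using ev by eventually_elim simp
  show "(\<lambda>n. d n (nat \<lceil>(1 + a) * t' n\<rceil>)) \<longlonglongrightarrow> 0" using tendsto_cong[OF e1] 1 by simp
  show "filterlim (\<lambda>n. d n (nat \<lfloor>(1 - a) * t' n\<rfloor>)) at_top sequentially" using filterlim_cong[OF refl refl e2] 2 by simp
qed

theorem theorem3p3:
  fixes S :: "nat \<Rightarrow> 'a set"
    and K :: "nat \<Rightarrow> 'a \<Rightarrow> 'a \<Rightarrow> real"
    and pp :: "nat \<Rightarrow> 'a \<Rightarrow> real"
    and mu :: "nat \<Rightarrow> 'a \<Rightarrow> real"
    and beta :: "nat \<Rightarrow> nat \<Rightarrow> real"
    and phi :: "nat \<Rightarrow> nat \<Rightarrow> 'a \<Rightarrow> real"
    and d :: "nat \<Rightarrow> nat \<Rightarrow> real"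
    and T :: "nat \<Rightarrow> real \<Rightarrow> ereal"
    and tau :: "nat \<Rightarrow> real \<Rightarrow> ereal"
    and lam :: "nat \<Rightarrow> real \<Rightarrow> ereal"
  defines "d \<equiv> \<lambda>n m. d2 (S n) (K n) (pp n) (mu n) m"
    and "T \<equiv> \<lambda>n eps. T2 (S n) (K n) (pp n) (mu n) eps"
    and "tau \<equiv> \<lambda>n c. taun (S n) (beta n) (mu n) (phi n) c"
    and "lam \<equiv> \<lambda>n c. eig_rate (beta n (jn (S n) (mu n) (phi n) c))"
  assumes chain: "\<And>n. irred_reversible_chain (S n) (K n) (pp n)"
    and init: "\<And>n. is_prob (S n) (mu n)"
    and eig: "\<And>n. ordered_eigenbasis (S n) (K n) (pp n) (beta n) (phi n)"
    and grow: "(\<exists>eps0>0. (\<lambda>n. T n eps0) \<longlonglongrightarrow> \<infinity>) \<or> (\<exists>c>0. (\<lambda>n. tau n c) \<longlonglongrightarrow> \<infinity>)"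
    and norm: "filterlim (\<lambda>n. one_step_norm (S n) (K n) (pp n) (mu n)) at_top sequentially"
  shows
    "(has_L2_cutoff d \<longleftrightarrow>
        (\<forall>eps>0. \<forall>c>0. (\<lambda>n. T n eps * lam n c) \<longlonglongrightarrow> \<infinity>))
   \<and> (has_L2_cutoff d \<longleftrightarrow>
        (\<exists>eps>0. \<forall>c>0. (\<lambda>n. T n eps * lam n c) \<longlonglongrightarrow> \<infinity>))
   \<and> (has_L2_cutoff d \<longleftrightarrow>
        (\<forall>c>0. (\<lambda>n. tau n c * lam n c) \<longlonglongrightarrow> \<infinity>))
   \<and> (has_L2_cutoff d \<longleftrightarrow>
        (\<forall>ct>0. \<forall>c>0. (\<lambda>n. tau n ct * lam n c) \<longlonglongrightarrow> \<infinity>))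
   \<and> (has_L2_cutoff d \<longleftrightarrow>
        (\<exists>ct>0. \<forall>c>0. (\<lambda>n. tau n ct * lam n c) \<longlonglongrightarrow> \<infinity>))
   \<and> (has_L2_cutoff d \<longrightarrow>
        (\<forall>c>0. \<exists>t. is_cutoff_time d t \<and> (\<forall>\<^sub>F n in sequentially. tau n c = ereal (t n)))
      \<and> (\<forall>eps>0. \<forall>delta>0. \<forall>c>0. \<exists>C::real. \<forall>\<^sub>F n in sequentially.
            \<bar>T n eps - T n delta\<bar> \<le> ereal C * max 1 (1 / lam n c))
      \<and> (\<forall>eps>0. \<forall>c>0. \<exists>C::real. \<forall>\<^sub>F n in sequentially.
            \<bar>T n eps - tau n c\<bar> \<le> ereal C * max 1 (esqrt (tau n c / lam n c))))"
proof -
  define Nn where "Nn = (\<lambda>n. card (S n))"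
  define bb where "bb = (\<lambda>n i. \<bar>beta n i\<bar>)"
  define ww where "ww = (\<lambda>n i. (coef (S n) (mu n) (phi n i))^2)"
  have admF: "\<And>n. adm (Nn n) (bb n) (ww n)"
    using adm_spec[OF chain init eig] by (simp add: Nn_def bb_def ww_def)
  have osn: "\<And>n. one_step_norm (S n) (K n) (pp n) (mu n) = 1 + DD (Nn n) (bb n) (ww n) 1"
    using osn_eq[OF chain init eig] by (simp add: Nn_def bb_def ww_def)
  have Dinf: "filterlim (\<lambda>n. DD (Nn n) (bb n) (ww n) 1) at_top sequentially"
    unfolding filterlim_at_top
  proof
    fix Z
    have "eventually (\<lambda>n. Z + 1 \<le> one_step_norm (S n) (K n) (pp n) (mu n)) sequentially"
      using norm unfolding filterlim_at_top by blast
    then show "eventually (\<lambda>n. Z \<le> DD (Nn n) (bb n) (ww n) 1) sequentially"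
      by eventually_elim (simp add: osn)
  qed
  interpret F: fam Nn bb ww by unfold_locales (fact admF, fact Dinf)
  have dE: "d = (\<lambda>n m. sqrt (F.D n m))"
    unfolding d_def using d2_eq[OF chain init eig] by (simp add: Nn_def bb_def ww_def)
  have TE: "\<And>n e. T n e = F.Te n e"
    unfolding T_def T2_def using d2_eq[OF chain init eig] by (simp add: Nn_def bb_def ww_def)
  have jnE: "\<And>n c. jn (S n) (mu n) (phi n) c = F.JN n c"
    unfolding jn_def JJ_def partial_mass_def WW_def Nn_def ww_def by simp
  have lamE: "\<And>n c. lam n c = eig_rate (beta n (F.JN n c))" unfolding lam_def jnE by simp
  have tauE: "\<And>n c. tau n c = Max ((\<lambda>j. ereal (ln (1 + WW (ww n) j)) / (2 * eig_rate (beta n j))) ` {F.JN n c..<Nn n})"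
    unfolding tau_def taun_def jnE by (simp add: partial_mass_def WW_def ww_def Nn_def)
  have gl: "\<And>n c. F.gd n c \<Longrightarrow> lam n c = ereal (F.lam n c)"
  proof -
    fix n c assume g: "F.gd n c"
    then have "0 < bb n (F.JN n c)" by (simp add: good_def)
    then have "beta n (F.JN n c) \<noteq> 0" by (simp add: bb_def)
    then show "lam n c = ereal (F.lam n c)" unfolding lamE eig_rate_def LAM_def by (simp add: bb_def)
  qed
  have gt: "\<And>n c. F.gd n c \<Longrightarrow> 0 < c \<Longrightarrow> tau n c = ereal (F.tau n c)"
  proof -
    fix n c assume g: "F.gd n c" and c: "0 < c"
    have jx: "F.jx n c" using g by (simp add: good_def)
    note J = JJ[OF jx less_imp_le[OF c]]
    have eq: "\<And>j. j \<in> {F.JN n c..<Nn n} \<Longrightarrow> ereal (ln (1 + WW (ww n) j)) / (2 * eig_rate (beta n j)) = ereal (vl (bb n) (ww n) j)"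
    proof -
      fix j assume j: "j \<in> {F.JN n c..<Nn n}"
      have j1: "1 \<le> j" "j < Nn n" using j J by auto
      have "bb n j \<le> bb n (F.JN n c)" using adm_mono[OF admF] J j by auto
      then have b1: "bb n j < 1" using g by (simp add: good_def)
      have W0: "0 \<le> ln (1 + WW (ww n) j)" using WW_nonneg[OF admF j1(2)] by simp
      show "ereal (ln (1 + WW (ww n) j)) / (2 * eig_rate (beta n j)) = ereal (vl (bb n) (ww n) j)"
      proof (cases "beta n j = 0")
        case True then show ?thesis using W0 by (simp add: eig_rate_def vl_def bb_def)
      next
        case False
        then have "0 < - ln \<bar>beta n j\<bar>" using b1 by (simp add: bb_def)
        then show ?thesis using False by (simp add: eig_rate_def vl_def bb_def)
      qed
    qed
    have ne: "{F.JN n c..<Nn n} \<noteq> {}" using J by auto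
    have "(\<lambda>j. ereal (ln (1 + WW (ww n) j)) / (2 * eig_rate (beta n j))) ` {F.JN n c..<Nn n} = (\<lambda>j. ereal (vl (bb n) (ww n) j)) ` {F.JN n c..<Nn n}"
      by (rule image_cong[OF refl eq])
    then have "tau n c = Max ((\<lambda>j. ereal (vl (bb n) (ww n) j)) ` {F.JN n c..<Nn n})"
      by (simp only: tauE)
    also have "\<dots> = Max (ereal ` (vl (bb n) (ww n) ` {F.JN n c..<Nn n}))" by (simp add: image_image)
    also have "\<dots> = ereal (Max (vl (bb n) (ww n) ` {F.JN n c..<Nn n}))"
      by (rule mono_Max_commute[symmetric]) (use ne in \<open>auto simp: mono_def\<close>)
    finally show "tau n c = ereal (F.tau n c)" by (simp add: TAU_def)
  qed
  have bad: "\<And>n c. F.jx n c \<Longrightarrow> 0 < c \<Longrightarrow> 0 < bb n (F.JN n c) \<Longrightarrow> \<not> F.gd n c \<Longrightarrow> lam n c = 0"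
  proof -
    fix n c assume jx: "F.jx n c" and c: "0 < c" and b0: "0 < bb n (F.JN n c)" and ng: "\<not> F.gd n c"
    note J = JJ[OF jx less_imp_le[OF c]]
    have "bb n (F.JN n c) \<le> 1" using adm_b1[OF admF] J by auto
    then have "bb n (F.JN n c) = 1" using ng jx b0 by (simp add: good_def)
    then show "lam n c = 0" unfolding lamE eig_rate_def by (auto simp: bb_def)
  qed
  have gd_from: "\<And>c X. 0 < c \<Longrightarrow> ((\<lambda>n. X n * lam n c) \<longlongrightarrow> \<infinity>) sequentially \<Longrightarrow> eventually (\<lambda>n. F.gd n c) sequentially"
  proof -
    fix c X assume c: "0 < c" and L: "((\<lambda>n. X n * lam n c) \<longlongrightarrow> \<infinity>) sequentially"
    have "eventually (\<lambda>n. ereal 0 < X n * lam n c) sequentially" using L by (simp add: tendsto_PInfty)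
    then show "eventually (\<lambda>n. F.gd n c) sequentially" using F.jex_ev[OF c]
    proof eventually_elim
      case (elim n)
      show ?case
      proof (rule ccontr)
        assume "\<not> F.gd n c"
        then have "lam n c = 0" using bad[of n c] c elim(2) by blast
        then show False using elim(1) by simp
      qed
    qed
  qed
  define HC where "HC = has_L2_cutoff d"
  define E2 where "E2 = (\<lambda>e c. ((\<lambda>n. T n e * lam n c) \<longlongrightarrow> \<infinity>) sequentially)"
  define E5 where "E5 = (\<lambda>ct c. ((\<lambda>n. tau n ct * lam n c) \<longlongrightarrow> \<infinity>) sequentially)"
  define R where "R = (\<lambda>ct c. filterlim (\<lambda>n. F.tau n ct * F.lam n c) at_top sequentially)"
  define G where "G = (\<lambda>c. eventually (\<lambda>n. F.gd n c) sequentially)"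
  have HC_t: "HC \<Longrightarrow> \<exists>t. cutoff_limits (\<lambda>n m. sqrt (F.D n m)) t \<and> (\<forall>n. 0 < t n)"
    unfolding HC_def has_L2_cutoff_def is_cutoff_time_def dE by blast
  have E2_of: "\<And>t e c. cutoff_limits (\<lambda>n m. sqrt (F.D n m)) t \<Longrightarrow> (\<forall>n. 0 < t n) \<Longrightarrow> 0 < e \<Longrightarrow> 0 < c \<Longrightarrow> E2 e c"
  proof -
    fix t :: "nat \<Rightarrow> real" and e c :: real assume cut: "cutoff_limits (\<lambda>n m. sqrt (F.D n m)) t" and tp: "\<forall>n. 0 < t n" and e: "0 < e" and c: "0 < c"
    have tp': "\<And>n. 0 < t n" using tp by simp
    note CC = F.C1C2[OF cut tp' c e]
    have ev: "eventually (\<lambda>n. T n e * lam n c = ereal (real (F.Tr n e) * F.lam n c)) sequentially"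
      using CC(1) by eventually_elim (simp add: TE gl)
    show "E2 e c" unfolding E2_def using ereal_lim_iff[OF ev] CC(2) by simp
  qed
  have TTE: "\<And>e c ct. 0 < c \<Longrightarrow> c \<le> ct \<Longrightarrow> 0 < e \<Longrightarrow> 4 * ct \<le> e^2 \<Longrightarrow> E2 e c \<Longrightarrow> R ct c \<and> G c"
  proof -
    fix e c ct :: real assume c: "0 < c" "c \<le> ct" and e: "0 < e" "4 * ct \<le> e^2" and E: "E2 e c"
    have g: "G c" unfolding G_def using gd_from[OF c(1), of "\<lambda>n. T n e"] E unfolding E2_def by blast
    have H: "\<And>B. eventually (\<lambda>n. ereal B < F.Te n e * ereal (F.lam n c)) sequentially"
    proof -
      fix B
      have "eventually (\<lambda>n. ereal B < T n e * lam n c) sequentially" using E unfolding E2_def by (simp add: tendsto_PInfty)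
      then show "eventually (\<lambda>n. ereal B < F.Te n e * ereal (F.lam n c)) sequentially"
        using g unfolding G_def by eventually_elim (simp add: TE gl)
    qed
    show "R ct c \<and> G c" using F.TT[OF c e g[unfolded G_def] H] g unfolding R_def by simp
  qed
  have E5_of: "\<And>ct c. 0 < ct \<Longrightarrow> G ct \<Longrightarrow> G c \<Longrightarrow> R ct c \<Longrightarrow> E5 ct c"
  proof -
    fix ct c :: real assume ct: "0 < ct" and g: "G ct" "G c" and r: "R ct c"
    have ev: "eventually (\<lambda>n. tau n ct * lam n c = ereal (F.tau n ct * F.lam n c)) sequentially"
      using g unfolding G_def by eventually_elim (simp add: gt[OF _ ct] gl)
    show "E5 ct c" unfolding E5_def using ereal_lim_iff[OF ev] r unfolding R_def by simp
  qed
  have E5_to: "\<And>ct c. 0 < c \<Longrightarrow> c \<le> ct \<Longrightarrow> E5 ct c \<Longrightarrow> G c \<and> G ct \<and> R ct c"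
  proof -
    fix ct c :: real assume c: "0 < c" "c \<le> ct" and E: "E5 ct c"
    have ct: "0 < ct" using c by simp
    have g: "G c" unfolding G_def using gd_from[OF c(1), of "\<lambda>n. tau n ct"] E unfolding E5_def by blast
    have g2: "G ct" unfolding G_def using g[unfolded G_def] F.jex_ev[OF ct]
      by eventually_elim (use F.gd_up c in blast)
    have ev: "eventually (\<lambda>n. tau n ct * lam n c = ereal (F.tau n ct * F.lam n c)) sequentially"
      using g g2 unfolding G_def by eventually_elim (simp add: gt[OF _ ct] gl)
    show "G c \<and> G ct \<and> R ct c" using g g2 ereal_lim_iff[OF ev] E unfolding E5_def R_def by simp
  qed
  have mono_R: "\<And>c ct. 0 < c \<Longrightarrow> c \<le> ct \<Longrightarrow> G c \<Longrightarrow> G ct \<Longrightarrow> R ct c \<Longrightarrow> R c c"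
  proof -
    fix c ct :: real assume c: "0 < c" "c \<le> ct" and g: "G c" "G ct" and r: "R ct c"
    show "R c c" unfolding R_def filterlim_at_top
    proof
      fix Z
      show "eventually (\<lambda>n. Z \<le> F.tau n c * F.lam n c) sequentially"
        using g r unfolding G_def R_def filterlim_at_top
      proof -
        assume g1: "eventually (\<lambda>n. F.gd n c) sequentially" and g2: "eventually (\<lambda>n. F.gd n ct) sequentially"
          and r1: "\<forall>Z. eventually (\<lambda>n. Z \<le> F.tau n ct * F.lam n c) sequentially"
        show ?thesis using g1 g2 r1[rule_format, of Z]
        proof eventually_elim
          case (elim n)
          have jx: "F.jx n ct" using elim(2) by (simp add: good_def)
          have "F.tau n ct \<le> F.tau n c" using TAU_mono[OF admF jx c] .
          then have "F.tau n ct * F.lam n c \<le> F.tau n c * F.lam n c"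
            using LAM_pos[OF elim(1)] by (intro mult_right_mono) auto
          then show ?case using elim(3) by simp
        qed
      qed
    qed
  qed
  have CUT_HC: "\<And>ct. 0 < ct \<Longrightarrow> (\<And>c. 0 < c \<Longrightarrow> c \<le> ct \<Longrightarrow> G c \<and> R c c) \<Longrightarrow>
      \<exists>t. is_cutoff_time d t \<and> (\<forall>\<^sub>F n in sequentially. tau n ct = ereal (t n))"
  proof -
    fix ct :: real assume ct: "0 < ct" and H: "\<And>c. 0 < c \<Longrightarrow> c \<le> ct \<Longrightarrow> G c \<and> R c c"
    have cl: "cutoff_limits (\<lambda>n m. sqrt (F.D n m)) (\<lambda>n. F.tau n ct)"
      by (rule F.CUT[OF ct]) (use H in \<open>auto simp: G_def R_def\<close>)
    define t where "t = (\<lambda>n. if 0 < F.tau n ct then F.tau n ct else 1)"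
    have Hc: "G ct" "R ct ct" using H[OF ct order_refl] by auto
    have ev: "eventually (\<lambda>n. F.gd n ct \<and> 0 < F.tau n ct) sequentially"
      using Hc(1)[unfolded G_def] F.ev_ge[OF Hc(2)[unfolded R_def], of 1]
    proof eventually_elim
      case (elim n)
      have "0 < F.lam n ct" using LAM_pos[OF elim(1)] .
      then have "0 < F.tau n ct" using elim(2) by (smt (verit) mult_nonpos_nonneg)
      then show ?case using elim by simp
    qed
    have ev2: "eventually (\<lambda>n. F.tau n ct = t n) sequentially" using ev by eventually_elim (simp add: t_def)
    have "is_cutoff_time d t" unfolding is_cutoff_time_def dE
      using cutoff_limits_cong[OF ev2 cl] by (simp add: t_def)
    moreover have "\<forall>\<^sub>F n in sequentially. tau n ct = ereal (t n)"
      using ev by eventually_elim (simp add: gt[OF _ ct] t_def)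
    ultimately show "\<exists>t. is_cutoff_time d t \<and> (\<forall>\<^sub>F n in sequentially. tau n ct = ereal (t n))" by blast
  qed
  have HCI: "\<And>ct. 0 < ct \<Longrightarrow> (\<And>c. 0 < c \<Longrightarrow> c \<le> ct \<Longrightarrow> G c \<and> R c c) \<Longrightarrow> HC"
    unfolding HC_def has_L2_cutoff_def using CUT_HC by blast
  define E2all where "E2all = (\<forall>e>0. \<forall>c>0. E2 e c)"
  define E5all where "E5all = (\<forall>ct>0. \<forall>c>0. E5 ct c)"
  have s1: "HC \<Longrightarrow> E2all"
  proof -
    assume hc: HC
    obtain t where t: "cutoff_limits (\<lambda>n m. sqrt (F.D n m)) t" "\<forall>n. 0 < t n" using HC_t[OF hc] by blast
    show E2all unfolding E2all_def
    proof (intro allI impI)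
      fix e c :: real assume "0 < e" "0 < c"
      then show "E2 e c" by (rule E2_of[OF t])
    qed
  qed
  have s2: "E2all \<Longrightarrow> (\<forall>c>0. G c \<and> R c c)"
  proof (intro allI impI)
    fix c :: real assume A: E2all and c: "0 < c"
    have e0: "0 < 2 * sqrt c" and e4: "4 * c \<le> (2 * sqrt c)^2" using c by (auto simp: power_mult_distrib)
    have E: "E2 (2 * sqrt c) c" using A[unfolded E2all_def, rule_format, OF e0 c] .
    show "G c \<and> R c c" using TTE[OF c order_refl e0 e4 E] by simp
  qed
  have s3: "E2all \<Longrightarrow> E5all" unfolding E5all_def
  proof (intro allI impI)
    fix ct c :: real assume A: E2all and ct: "0 < ct" and c: "0 < c"
    note RR = s2[OF A]
    show "E5 ct c"
    proof (cases "c \<le> ct")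
      case True
      have e0: "0 < 2 * sqrt ct" and e4: "4 * ct \<le> (2 * sqrt ct)^2" using ct by (auto simp: power_mult_distrib)
      have E: "E2 (2 * sqrt ct) c" using A[unfolded E2all_def, rule_format, OF e0 c] .
      have rg: "R ct c \<and> G c" by (rule TTE[OF c True e0 e4 E])
      have gct: "G ct" using RR[rule_format, OF ct] by simp
      show ?thesis using E5_of[OF ct gct conjunct2[OF rg] conjunct1[OF rg]] .
    next
      case False
      have gc: "G c" "R c c" using RR[rule_format, OF c] by auto
      have gct: "G ct" using RR[rule_format, OF ct] by simp
      have "R ct c" unfolding R_def filterlim_at_top
      proof
        fix Z
        show "eventually (\<lambda>n. Z \<le> F.tau n ct * F.lam n c) sequentially"
          using gc(1)[unfolded G_def] gc(2)[unfolded R_def filterlim_at_top, rule_format, of Z]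
        proof eventually_elim
          case (elim n)
          have jx: "F.jx n c" using elim(1) by (simp add: good_def)
          have "F.tau n c \<le> F.tau n ct" using TAU_mono[OF admF jx ct] False by simp
          then have "F.tau n c * F.lam n c \<le> F.tau n ct * F.lam n c"
            using LAM_pos[OF elim(1)] by (intro mult_right_mono) auto
          then show ?case using elim(2) by simp
        qed
      qed
      then show ?thesis using E5_of[OF ct gct gc(1)] by simp
    qed
  qed
  have s4: "(\<forall>c>0. E5 c c) \<Longrightarrow> HC"
  proof -
    assume A: "\<forall>c>0. E5 c c"
    show HC
    proof (rule HCI[of 1])
      fix c :: real assume c: "0 < c" "c \<le> 1"
      have "G c \<and> G c \<and> R c c" by (rule E5_to[OF c(1) order_refl A[rule_format, OF c(1)]])
      then show "G c \<and> R c c" by simp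
    qed simp
  qed
  have s5: "\<And>e. 0 < e \<Longrightarrow> (\<forall>c>0. E2 e c) \<Longrightarrow> HC"
  proof -
    fix e :: real assume e: "0 < e" and A: "\<forall>c>0. E2 e c"
    define ct where "ct = e^2/4"
    have ct: "0 < ct" "4 * ct \<le> e^2" using e by (auto simp: ct_def)
    have Gct: "G ct" using TTE[OF ct(1) order_refl e ct(2) A[rule_format, OF ct(1)]] by simp
    show HC
    proof (rule HCI[OF ct(1)])
      fix c :: real assume c: "0 < c" "c \<le> ct"
      have rg: "R ct c \<and> G c" by (rule TTE[OF c e ct(2) A[rule_format, OF c(1)]])
      have "R c c" by (rule mono_R[OF c conjunct2[OF rg] Gct conjunct1[OF rg]])
      then show "G c \<and> R c c" using rg by simp
    qed
  qed
  have s6: "\<And>ct. 0 < ct \<Longrightarrow> (\<forall>c>0. E5 ct c) \<Longrightarrow> HC"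
  proof -
    fix ct :: real assume ct: "0 < ct" and A: "\<forall>c>0. E5 ct c"
    show HC
    proof (rule HCI[OF ct])
      fix c :: real assume c: "0 < c" "c \<le> ct"
      have h: "G c \<and> G ct \<and> R ct c" by (rule E5_to[OF c A[rule_format, OF c(1)]])
      have "R c c" using mono_R[OF c] h by blast
      then show "G c \<and> R c c" using h by simp
    qed
  qed
  have M1: "HC \<Longrightarrow> \<forall>c>0. \<exists>t. is_cutoff_time d t \<and> (\<forall>\<^sub>F n in sequentially. tau n c = ereal (t n))"
  proof (intro allI impI)
    fix c :: real assume hc: HC and c: "0 < c"
    note RR = s2[OF s1[OF hc]]
    show "\<exists>t. is_cutoff_time d t \<and> (\<forall>\<^sub>F n in sequentially. tau n c = ereal (t n))"
      by (rule CUT_HC[OF c]) (use RR in auto)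
  qed
  have M2: "HC \<Longrightarrow> \<forall>eps>0. \<forall>delta>0. \<forall>c>0. \<exists>C::real. \<forall>\<^sub>F n in sequentially.
            \<bar>T n eps - T n delta\<bar> \<le> ereal C * max 1 (1 / lam n c)"
  proof (intro allI impI)
    fix e dl c :: real assume hc: HC and e: "0 < e" and dl: "0 < dl" and c: "0 < c"
    obtain t where t: "cutoff_limits (\<lambda>n m. sqrt (F.D n m)) t" "\<forall>n. 0 < t n" using HC_t[OF hc] by blast
    have tp': "\<And>n. 0 < t n" using t(2) by simp
    note RR = s2[OF s1[OF hc]]
    have Gc: "\<And>c1. 0 < c1 \<Longrightarrow> eventually (\<lambda>n. F.gd n c1) sequentially"
    proof -
      fix c1 :: real assume "0 < c1" then show "eventually (\<lambda>n. F.gd n c1) sequentially"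
        using RR[rule_format, of c1] unfolding G_def by simp
    qed
    have FF: "\<And>e' c1. 0 < e' \<Longrightarrow> 0 < c1 \<Longrightarrow> eventually (\<lambda>n. \<exists>m. sqrt (F.D n m) \<le> e') sequentially \<and> filterlim (\<lambda>n. real (F.Tr n e') * F.lam n c1) at_top sequentially"
    proof -
      fix e' c1 :: real assume h: "0 < e'" "0 < c1"
      have a1: "eventually (\<lambda>n. F.gd n c1 \<and> (\<exists>m. sqrt (F.D n m) \<le> e')) sequentially"
        by (rule F.C1C2(1)[OF t(1) tp' h(2) h(1)])
      have a2: "filterlim (\<lambda>n. real (F.Tr n e') * F.lam n c1) at_top sequentially"
        by (rule F.C1C2(2)[OF t(1) tp' h(2) h(1)])
      have a3: "eventually (\<lambda>n. \<exists>m. sqrt (F.D n m) \<le> e') sequentially"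
        using a1 by (rule eventually_mono) simp
      show "eventually (\<lambda>n. \<exists>m. sqrt (F.D n m) \<le> e') sequentially \<and> filterlim (\<lambda>n. real (F.Tr n e') * F.lam n c1) at_top sequentially"
        using a2 a3 by simp
    qed
    have gen: "\<And>a b. 0 < a \<Longrightarrow> a < b \<Longrightarrow> \<exists>C::real. \<forall>\<^sub>F n in sequentially.
            \<bar>T n b - T n a\<bar> \<le> ereal C * max 1 (1 / lam n c) \<and> \<bar>T n a - T n b\<bar> \<le> ereal C * max 1 (1 / lam n c)"
    proof -
      fix a b :: real assume ab: "0 < a" "a < b"
      have b0: "0 < b" using ab by simp
      have FFb: "\<And>c1. 0 < c1 \<Longrightarrow> eventually (\<lambda>n. \<exists>m. sqrt (F.D n m) \<le> b) sequentially \<and> filterlim (\<lambda>n. real (F.Tr n b) * F.lam n c1) at_top sequentially"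
        by (rule FF[OF b0])
      obtain C where C: "eventually (\<lambda>n. (\<exists>m. sqrt (F.D n m) \<le> a) \<and> (\<exists>m. sqrt (F.D n m) \<le> b) \<and> real (F.Tr n b) \<le> real (F.Tr n a) \<and>
        real (F.Tr n a) \<le> real (F.Tr n b) + C * max 1 (1 / F.lam n c)) sequentially"
        using F.P2[OF c ab(1) ab(2) Gc FFb] by blast
      show "\<exists>C::real. \<forall>\<^sub>F n in sequentially.
            \<bar>T n b - T n a\<bar> \<le> ereal C * max 1 (1 / lam n c) \<and> \<bar>T n a - T n b\<bar> \<le> ereal C * max 1 (1 / lam n c)"
      proof (intro exI)
        show "\<forall>\<^sub>F n in sequentially.
            \<bar>T n b - T n a\<bar> \<le> ereal C * max 1 (1 / lam n c) \<and> \<bar>T n a - T n b\<bar> \<le> ereal C * max 1 (1 / lam n c)"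
          using C Gc[OF c]
        proof eventually_elim
          case (elim n)
          have l: "0 < F.lam n c" using LAM_pos[OF elim(2)] .
          have i1: "1 / lam n c = ereal (1 / F.lam n c)" using l by (simp add: gl[OF elim(2)] one_ereal_def)
          have i2: "max 1 (ereal (1 / F.lam n c)) = ereal (max 1 (1 / F.lam n c))" by (simp add: max_def)
          have eq: "ereal C * max 1 (1 / lam n c) = ereal (C * max 1 (1 / F.lam n c))"
            by (simp only: i1 i2 times_ereal.simps(1))
          have Ta: "T n a = ereal (real (F.Tr n a))" using elim(1) by (simp add: TE)
          have Tb: "T n b = ereal (real (F.Tr n b))" using elim(1) by (simp add: TE)
          have r1: "real (F.Tr n b) \<le> real (F.Tr n a)" and r2: "real (F.Tr n a) \<le> real (F.Tr n b) + C * max 1 (1 / F.lam n c)"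
            using elim(1) by blast+
          have x1: "\<bar>real (F.Tr n b) - real (F.Tr n a)\<bar> \<le> C * max 1 (1 / F.lam n c)"
            unfolding abs_le_iff using r1 r2 by linarith
          have x2: "\<bar>real (F.Tr n a) - real (F.Tr n b)\<bar> \<le> C * max 1 (1 / F.lam n c)"
            unfolding abs_le_iff using r1 r2 by linarith
          show ?case unfolding eq Ta Tb using x1 x2 by simp
        qed
      qed
    qed
    show "\<exists>C::real. \<forall>\<^sub>F n in sequentially. \<bar>T n e - T n dl\<bar> \<le> ereal C * max 1 (1 / lam n c)"
    proof (cases "dl < e")
      case True
      obtain C where C: "\<forall>\<^sub>F n in sequentially. \<bar>T n e - T n dl\<bar> \<le> ereal C * max 1 (1 / lam n c) \<and> \<bar>T n dl - T n e\<bar> \<le> ereal C * max 1 (1 / lam n c)"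
        using gen[OF dl True] by blast
      show ?thesis by (rule exI[of _ C], rule eventually_mono[OF C]) simp
    next
      case False
      show ?thesis
      proof (cases "e < dl")
        case True
        obtain C where C: "\<forall>\<^sub>F n in sequentially. \<bar>T n dl - T n e\<bar> \<le> ereal C * max 1 (1 / lam n c) \<and> \<bar>T n e - T n dl\<bar> \<le> ereal C * max 1 (1 / lam n c)"
          using gen[OF e True] by blast
        show ?thesis by (rule exI[of _ C], rule eventually_mono[OF C]) simp
      next
        case False
        then have de: "dl = e" using \<open>\<not> dl < e\<close> by simp
        show ?thesis
        proof (intro exI)
          show "\<forall>\<^sub>F n in sequentially. \<bar>T n e - T n dl\<bar> \<le> ereal 0 * max 1 (1 / lam n c)"
            using conjunct1[OF FF[OF e c]]
          proof eventually_elim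
            case (elim n)
            have "T n e = ereal (real (F.Tr n e))" using elim by (simp add: TE)
            then show ?case using de by (simp add: zero_ereal_def[symmetric])
          qed
        qed
      qed
    qed
  qed
  have M3: "HC \<Longrightarrow> \<forall>eps>0. \<forall>c>0. \<exists>C::real. \<forall>\<^sub>F n in sequentially.
            \<bar>T n eps - tau n c\<bar> \<le> ereal C * max 1 (esqrt (tau n c / lam n c))"
  proof (intro allI impI)
    fix e c :: real assume hc: HC and e: "0 < e" and c: "0 < c"
    note RR = s2[OF s1[OF hc]]
    have H: "\<And>c1. 0 < c1 \<Longrightarrow> eventually (\<lambda>n. F.gd n c1) sequentially \<and> filterlim (\<lambda>n. F.tau n c1 * F.lam n c1) at_top sequentially"
    proof -
      fix c1 :: real assume "0 < c1"
      then show "eventually (\<lambda>n. F.gd n c1) sequentially \<and> filterlim (\<lambda>n. F.tau n c1 * F.lam n c1) at_top sequentially"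
        using RR[rule_format, of c1] unfolding G_def R_def by simp
    qed
    obtain C where C: "eventually (\<lambda>n. (\<exists>m. sqrt (F.D n m) \<le> e) \<and> \<bar>real (F.Tr n e) - F.tau n c\<bar> \<le> C * max 1 (sqrt (F.tau n c / F.lam n c))) sequentially"
      using F.P3[OF c e H] by blast
    have Gc: "eventually (\<lambda>n. F.gd n c) sequentially" using H[OF c] by simp
    show "\<exists>C::real. \<forall>\<^sub>F n in sequentially. \<bar>T n e - tau n c\<bar> \<le> ereal C * max 1 (esqrt (tau n c / lam n c))"
    proof (intro exI)
      show "\<forall>\<^sub>F n in sequentially. \<bar>T n e - tau n c\<bar> \<le> ereal C * max 1 (esqrt (tau n c / lam n c))"
        using C Gc
      proof eventually_elim
        case (elim n)
        have l: "0 < F.lam n c" using LAM_pos[OF elim(2)] .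
        have i1: "tau n c / lam n c = ereal (F.tau n c / F.lam n c)" using l by (simp add: gl[OF elim(2)] gt[OF elim(2) c])
        have i2: "esqrt (ereal (F.tau n c / F.lam n c)) = ereal (sqrt (F.tau n c / F.lam n c))" by (simp add: esqrt_def)
        have i3: "max 1 (ereal (sqrt (F.tau n c / F.lam n c))) = ereal (max 1 (sqrt (F.tau n c / F.lam n c)))" by (simp add: max_def)
        have eq: "ereal C * max 1 (esqrt (tau n c / lam n c)) = ereal (C * max 1 (sqrt (F.tau n c / F.lam n c)))"
          by (simp only: i1 i2 i3 times_ereal.simps(1))
        have Te: "T n e = ereal (real (F.Tr n e))" using elim(1) by (simp add: TE)
        have tc: "tau n c = ereal (F.tau n c)" by (rule gt[OF elim(2) c])
        have x: "\<bar>real (F.Tr n e) - F.tau n c\<bar> \<le> C * max 1 (sqrt (F.tau n c / F.lam n c))" using elim(1) by blast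
        have ab: "\<bar>T n e - tau n c\<bar> = ereal \<bar>real (F.Tr n e) - F.tau n c\<bar>" unfolding Te tc by simp
        show ?case unfolding eq ab using x by simp
      qed
    qed
  qed
  have E2E3: "E2all \<Longrightarrow> (\<exists>eps>0. \<forall>c>0. E2 eps c)" unfolding E2all_def by (intro exI[of _ 1]) auto
  have E5E4: "E5all \<Longrightarrow> (\<forall>c>0. E5 c c)" unfolding E5all_def by blast
  have E5E6: "E5all \<Longrightarrow> (\<exists>ct>0. \<forall>c>0. E5 ct c)" unfolding E5all_def by (intro exI[of _ 1]) auto
  have e2all: "HC \<longleftrightarrow> E2all" using s1 s5 E2E3 by blast
  have e3: "HC \<longleftrightarrow> (\<exists>eps>0. \<forall>c>0. E2 eps c)" using s1 s5 E2E3 by blast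
  have e5all: "HC \<longleftrightarrow> E5all" using s1 s3 s4 E5E4 by blast
  have e4: "HC \<longleftrightarrow> (\<forall>c>0. E5 c c)" using e5all s4 E5E4 by blast
  have e6: "HC \<longleftrightarrow> (\<exists>ct>0. \<forall>c>0. E5 ct c)" using e5all s6 E5E6 by blast
  have f1: "has_L2_cutoff d \<longleftrightarrow> (\<forall>eps>0. \<forall>c>0. (\<lambda>n. T n eps * lam n c) \<longlonglongrightarrow> \<infinity>)"
    using e2all unfolding HC_def E2all_def E2_def .
  have f2: "has_L2_cutoff d \<longleftrightarrow> (\<exists>eps>0. \<forall>c>0. (\<lambda>n. T n eps * lam n c) \<longlonglongrightarrow> \<infinity>)"
    using e3 unfolding HC_def E2_def .
  have f3: "has_L2_cutoff d \<longleftrightarrow> (\<forall>c>0. (\<lambda>n. tau n c * lam n c) \<longlonglongrightarrow> \<infinity>)"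
    using e4 unfolding HC_def E5_def .
  have f4: "has_L2_cutoff d \<longleftrightarrow> (\<forall>ct>0. \<forall>c>0. (\<lambda>n. tau n ct * lam n c) \<longlonglongrightarrow> \<infinity>)"
    using e5all unfolding HC_def E5all_def E5_def .
  have f5: "has_L2_cutoff d \<longleftrightarrow> (\<exists>ct>0. \<forall>c>0. (\<lambda>n. tau n ct * lam n c) \<longlonglongrightarrow> \<infinity>)"
    using e6 unfolding HC_def E5_def .
  have f6: "has_L2_cutoff d \<longrightarrow>
        (\<forall>c>0. \<exists>t. is_cutoff_time d t \<and> (\<forall>\<^sub>F n in sequentially. tau n c = ereal (t n)))
      \<and> (\<forall>eps>0. \<forall>delta>0. \<forall>c>0. \<exists>C::real. \<forall>\<^sub>F n in sequentially.
            \<bar>T n eps - T n delta\<bar> \<le> ereal C * max 1 (1 / lam n c))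
      \<and> (\<forall>eps>0. \<forall>c>0. \<exists>C::real. \<forall>\<^sub>F n in sequentially.
            \<bar>T n eps - tau n c\<bar> \<le> ereal C * max 1 (esqrt (tau n c / lam n c)))"
  proof
    assume h: "has_L2_cutoff d"
    then have hc: HC unfolding HC_def .
    show "(\<forall>c>0. \<exists>t. is_cutoff_time d t \<and> (\<forall>\<^sub>F n in sequentially. tau n c = ereal (t n)))
      \<and> (\<forall>eps>0. \<forall>delta>0. \<forall>c>0. \<exists>C::real. \<forall>\<^sub>F n in sequentially.
            \<bar>T n eps - T n delta\<bar> \<le> ereal C * max 1 (1 / lam n c))
      \<and> (\<forall>eps>0. \<forall>c>0. \<exists>C::real. \<forall>\<^sub>F n in sequentially.
            \<bar>T n eps - tau n c\<bar> \<le> ereal C * max 1 (esqrt (tau n c / lam n c)))"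
      using M1[OF hc] M2[OF hc] M3[OF hc] by (intro conjI)
  qed
  show ?thesis using f1 f2 f3 f4 f5 f6 by (intro conjI)
qed


end
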